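(* Let $(\widehat x_1,\widehat y_1),\dots,(\widehat x_N,\widehat y_N)$ be data with pairwise distinct $\widehat x_i$ (so $C=N$ and each $N_c=1$), and let $\rho_c=0$ for all $c=1,\dots,N$ and $\varepsilon\ge0$. Let $\widehat{\mathbb P}$ be the nominal distribution with $\widehat p_c=1/N$ and $\widehat\theta_c=(\nabla\Psi)^{-1}(T(\widehat y_c))\in\Theta$ for all $c$. Then the distributionally robust estimation problem $\min_{w\in\mathcal W}\sup_{\mathbb Q\in\mathbb B(\widehat{\mathbb P})}\mathbb E_{\mathbb Q}[\ell_\lambda(X,Y,w)]$ is equivalent to \[\min_{w\in\mathcal W}\ \sup_{\mathbb Q:\ \mathrm{KL}(\mathbb Q\|\widehat{\mathbb P}^{\mathrm{emp}})\le\varepsilon}\mathbb E_{\mathbb Q}[\ell_\lambda(X,Y,w)],\] where $\widehat{\mathbb P}^{\mathrm{emp}}=N^{-1}\sum_{i=1}^N\delta_{(\widehat x_i,\widehat y_i)}$.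
   Context: Exponential family: $\nu$ a measure on $\mathcal Y\subseteq\mathbb R^m$, $h\ge0$, $T:\mathcal Y\to\mathbb R^p$; $f(y|\theta)=h(y)\exp(\langle\theta,T(y)\rangle-\Psi(\theta))$ density w.r.t. $\nu$; $\Theta=\{\theta\in\mathbb R^p:\int he^{\langle\theta,T\rangle}d\nu<\infty\}$, $\Psi(\theta)=\log\int he^{\langle\theta,T\rangle}d\nu$; regular family ($\Theta$ open, $T_i$ affinely independent), so $\nabla\Psi$ is injective on $\Theta$. $\mathcal X\subseteq\mathbb R^n$, $\mathcal W$ finite-dimensional, $\lambda:\mathcal W\times\mathcal X\to\Theta$ jointly continuous; $\ell_\lambda(x,y,w)=\Psi(\lambda(w,x))-\langle T(y),\lambda(w,x)\rangle$. Nominal distribution $\widehat{\mathbb P}$: marginal $\sum_c\widehat p_c\delta_{\widehat x_c}$, conditional at $\widehat x_c$ with density $f(\cdot|\widehat\theta_c)$. KL divergence $\mathrm{KL}(\mathbb P_1\|\mathbb P_2)=\mathbb E_{\mathbb P_1}[\log d\mathbb P_1/d\mathbb P_2]$ if $\mathbb P_1\ll\mathbb P_2$, else $+\infty$. Ambiguity set $\mathbb B(\widehat{\mathbb P})$ (radii $\varepsilon\ge0$, $\rho\in\mathbb R_+^C$): all probability measures $\mathbb Q$ on $\mathcal X\times\mathcal Y$ for which there exist a probability measure $\mathbb Q_X$ on $\mathcal X$ and $\theta_c\in\Theta$ such that, with $\mathbb Q_{Y|\widehat x_c}$ having density $f(\cdot|\theta_c)$: $\mathbb Q(\{\widehat x_c\}\times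 A)=\mathbb Q_X(\{\widehat x_c\})\mathbb Q_{Y|\widehat x_c}(A)$ for all $c$ and measurable $A$; $\mathrm{KL}(\mathbb Q_{Y|\widehat x_c}\|\widehat{\mathbb P}_{Y|\widehat x_c})\le\rho_c$; $\mathrm{KL}(\mathbb Q_X\|\widehat{\mathbb P}_X)+\sum_c\rho_c\mathbb Q_X(\{\widehat x_c\})\le\varepsilon$. *)

theory Defs
  imports "HOL-Analysis.Analysis" "HOL-Probability.Probability"
begin

text \<open>The expectation is split into positive and negative
parts so that it is always defined as an extended real.\<close>

definition KL :: "'a measure \<Rightarrow> 'a measure \<Rightarrow> ereal" where
  "KL P1 P2 =
     (if sets P1 = sets P2 \<and> absolutely_continuous P2 P1 then
        enn2ereal (\<integral>\<^sup>+ z. ennreal (ln (enn2real (RN_deriv P2 P1 z))) \<partial>P1)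
        - enn2ereal (\<integral>\<^sup>+ z. ennreal (- ln (enn2real (RN_deriv P2 P1 z))) \<partial>P1)
      else \<infinity>)"

definition Theta :: "'y measure \<Rightarrow> ('y \<Rightarrow> real) \<Rightarrow> ('y \<Rightarrow> 'p::real_inner) \<Rightarrow> 'p set" where
  "Theta nu h T = {\<theta>. (\<integral>\<^sup>+ y. ennreal (h y * exp (\<theta> \<bullet> T y)) \<partial>nu) < \<infinity>}"

definition Psi :: "'y measure \<Rightarrow> ('y \<Rightarrow> real) \<Rightarrow> ('y \<Rightarrow> 'p::real_inner) \<Rightarrow> 'p \<Rightarrow> real" where
  "Psi nu h T \<theta> = ln (enn2real (\<integral>\<^sup>+ y. ennreal (h y * exp (\<theta> \<bullet> T y)) \<partial>nu))"

definition expfam_density ::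
  "'y measure \<Rightarrow> ('y \<Rightarrow> real) \<Rightarrow> ('y \<Rightarrow> 'p::real_inner) \<Rightarrow> 'p \<Rightarrow> 'y \<Rightarrow> real" where
  "expfam_density nu h T \<theta> y = h y * exp (\<theta> \<bullet> T y - Psi nu h T \<theta>)"

text \<open>Regular family: Theta open and the statistics T_1,...,T_p affinely independent, i.e.
no nontrivial affine relation a.T = c holds (h nu)-almost everywhere.\<close>

definition regular_expfam :: "'y measure \<Rightarrow> ('y \<Rightarrow> real) \<Rightarrow> ('y \<Rightarrow> 'p::real_inner) \<Rightarrow> bool" where
  "regular_expfam nu h T \<longleftrightarrow> open (Theta nu h T) \<and>
     (\<forall>a c. (AE y in nu. h y \<noteq> 0 \<longrightarrow> a \<bullet> T y = c) \<longrightarrow> a = 0 \<and> c = 0)"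

definition ell_loss ::
  "'y measure \<Rightarrow> ('y \<Rightarrow> real) \<Rightarrow> ('y \<Rightarrow> 'p::real_inner) \<Rightarrow> ('w \<Rightarrow> 'x \<Rightarrow> 'p)
     \<Rightarrow> 'x \<Rightarrow> 'y \<Rightarrow> 'w \<Rightarrow> real" where
  "ell_loss nu h T lam x y w = Psi nu h T (lam w x) - T y \<bullet> lam w x"

text \<open>MX, MY: measurable spaces on the covariate and response sets (sets MY = sets nu);
xh c (c < C): support points of the nominal marginal PX; th c: nominal conditional parameters;
rho, eps: radii.\<close>

definition amb_set ::
  "'x measure \<Rightarrow> 'y measure \<Rightarrow> 'y measure \<Rightarrow> ('y \<Rightarrow> real) \<Rightarrow> ('y \<Rightarrow> 'p::real_inner)
     \<Rightarrow> nat \<Rightarrow> (nat \<Rightarrow> 'x) \<Rightarrow> 'x measure \<Rightarrow> (nat \<Rightarrow> 'p) \<Rightarrow> (nat \<Rightarrow> real) \<Rightarrow> real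
     \<Rightarrow> ('x \<times> 'y) measure set" where
  "amb_set MX MY nu h T C xh PX th rho eps =
    {Q. prob_space Q \<and> sets Q = sets (MX \<Otimes>\<^sub>M MY) \<and>
      (\<exists>QX \<theta>. prob_space QX \<and> sets QX = sets MX \<and>
         (\<forall>c<C. \<theta> c \<in> Theta nu h T) \<and>
         (\<forall>c<C. \<forall>A\<in>sets MY.
            emeasure Q ({xh c} \<times> A)
              = emeasure QX {xh c} * emeasure (density nu (\<lambda>y. ennreal (expfam_density nu h T (\<theta> c) y))) A) \<and>
         (\<forall>c<C. KL (density nu (\<lambda>y. ennreal (expfam_density nu h T (\<theta> c) y)))
                    (density nu (\<lambda>y. ennreal (expfam_density nu h T (th c) y))) \<le> ereal (rho c)) \<and>
         KL QX PX + ereal (\<Sum>c<C. rho c * measure QX {xh c}) \<le> ereal eps)}"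

end

theory Submission
  imports Defs
begin

lemma nn_integral_finite_support:
  assumes S: "finite S" and ae: "AE z in M. z \<in> S" and sing: "\<And>s. s \<in> S \<Longrightarrow> {s} \<in> sets M"
  shows "(\<integral>\<^sup>+z. f z \<partial>M) = (\<Sum>s\<in>S. f s * emeasure M {s})"
proof -
  have "(\<integral>\<^sup>+z. f z \<partial>M) = (\<integral>\<^sup>+z. (\<Sum>s\<in>S. f s * indicator {s} z) \<partial>M)"
  proof (rule nn_integral_cong_AE)
    show "AE z in M. f z = (\<Sum>s\<in>S. f s * indicator {s} z)"
      using ae
    proof eventually_elim
      case (elim z)
      have "(\<Sum>s\<in>S. f s * indicator {s} z) = (\<Sum>s\<in>S. if s = z then f z else 0)"
        by (intro sum.cong) (auto simp: indicator_def)
      also have "\<dots> = f z" using elim S by (simp add: sum.delta')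
      finally show ?case by simp
    qed
  qed
  also have "\<dots> = (\<Sum>s\<in>S. \<integral>\<^sup>+z. f s * indicator {s} z \<partial>M)"
    by (rule nn_integral_sum) (use sing in auto)
  also have "\<dots> = (\<Sum>s\<in>S. f s * emeasure M {s})"
    by (intro sum.cong refl nn_integral_cmult_indicator) (use sing in auto)
  finally show ?thesis .
qed

lemma integral_finite_support:
  fixes f :: "'a \<Rightarrow> real"
  assumes fin: "finite_measure M" and S: "finite S" and ae: "AE z in M. z \<in> S"
    and sing: "\<And>s. s \<in> S \<Longrightarrow> {s} \<in> sets M" and fm: "f \<in> borel_measurable M"
  shows "(\<integral>z. f z \<partial>M) = (\<Sum>s\<in>S. f s * measure M {s})"
proof -
  interpret finite_measure M by fact
  have "(\<integral>z. f z \<partial>M) = (\<integral>z. (\<Sum>s\<in>S. f s * indicator {s} z) \<partial>M)"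
  proof (rule integral_cong_AE)
    show "AE z in M. f z = (\<Sum>s\<in>S. f s * indicator {s} z)"
      using ae
    proof eventually_elim
      case (elim z)
      have "(\<Sum>s\<in>S. f s * indicator {s} z) = (\<Sum>s\<in>S. if s = z then f z else 0)"
        by (intro sum.cong) (auto simp: indicator_def)
      also have "\<dots> = f z" using elim S by (simp add: sum.delta')
      finally show ?case by simp
    qed
  qed (use sing fm in auto)
  also have "\<dots> = (\<Sum>s\<in>S. \<integral>z. f s * indicator {s} z \<partial>M)"
    by (rule Bochner_Integration.integral_sum[where f="\<lambda>s z. f s * indicator {s} z"]) (use sing in \<open>auto intro!: integrable_real_mult_indicator simp: emeasure_eq_measure\<close>)
  also have "\<dots> = (\<Sum>s\<in>S. f s * measure M {s})"
    by (intro sum.cong refl) (use sing in auto)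
  finally show ?thesis .
qed

lemma finite_set_in_sets:
  assumes "finite S" "\<And>s. s \<in> S \<Longrightarrow> {s} \<in> sets M"
  shows "S \<in> sets M"
proof -
  have "S = (\<Union>s\<in>S. {s})" by auto
  also have "\<dots> \<in> sets M" using assms by (intro sets.finite_UN) auto
  finally show ?thesis .
qed

lemma ennreal_pos_neg_parts:
  fixes t :: "'b \<Rightarrow> real"
  assumes "finite S"
  shows "enn2ereal (\<Sum>s\<in>S. ennreal (t s)) - enn2ereal (\<Sum>s\<in>S. ennreal (- t s)) = ereal (\<Sum>s\<in>S. t s)"
proof -
  have "(\<Sum>s\<in>S. ennreal (t s)) = (\<Sum>s\<in>S. ennreal (max 0 (t s)))"
    by (intro sum.cong refl) (simp add: max_def ennreal_neg)
  also have "\<dots> = ennreal (\<Sum>s\<in>S. max 0 (t s))" by (rule sum_ennreal) auto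
  finally have 1: "(\<Sum>s\<in>S. ennreal (t s)) = ennreal (\<Sum>s\<in>S. max 0 (t s))" .
  have "(\<Sum>s\<in>S. ennreal (- t s)) = (\<Sum>s\<in>S. ennreal (max 0 (- t s)))"
    by (intro sum.cong refl) (simp add: max_def ennreal_neg)
  also have "\<dots> = ennreal (\<Sum>s\<in>S. max 0 (- t s))" by (rule sum_ennreal) auto
  finally have 2: "(\<Sum>s\<in>S. ennreal (- t s)) = ennreal (\<Sum>s\<in>S. max 0 (- t s))" .
  have 3: "(\<Sum>s\<in>S. max 0 (t s)) - (\<Sum>s\<in>S. max 0 (- t s)) = (\<Sum>s\<in>S. t s)"
    by (simp add: sum_subtractf[symmetric]) (intro sum.cong refl, simp add: max_def)
  show ?thesis unfolding 1 2
    by (simp add: enn2ereal_ennreal sum_nonneg 3[symmetric])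
qed

lemma KL_discrete:
  assumes P1: "prob_space P1" and P2: "prob_space P2" and sets_eq: "sets P1 = sets P2"
    and S: "finite S" and sing: "\<And>s. s \<in> S \<Longrightarrow> {s} \<in> sets P2"
    and conc: "emeasure P2 (space P2 - S) = 0"
    and pos: "\<And>s. s \<in> S \<Longrightarrow> 0 < measure P2 {s}"
  shows "absolutely_continuous P2 P1 \<longleftrightarrow> emeasure P1 (space P1 - S) = 0"
    and "emeasure P1 (space P1 - S) = 0 \<Longrightarrow>
           KL P1 P2 = ereal (\<Sum>s\<in>S. measure P1 {s} * ln (measure P1 {s} / measure P2 {s}))"
    and "emeasure P1 (space P1 - S) \<noteq> 0 \<Longrightarrow> KL P1 P2 = \<infinity>"
proof -
  interpret P1: prob_space P1 by fact
  interpret P2: prob_space P2 by fact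
  have sp: "space P1 = space P2" using sets_eq by (rule sets_eq_imp_space_eq)
  have Ssets: "S \<in> sets P2" using S sing by (rule finite_set_in_sets)
  have Dsets: "space P2 - S \<in> sets P2" using Ssets by auto
  show ac: "absolutely_continuous P2 P1 \<longleftrightarrow> emeasure P1 (space P1 - S) = 0"
  proof
    assume "absolutely_continuous P2 P1"
    then show "emeasure P1 (space P1 - S) = 0"
      using absolutely_continuousD[OF _ Dsets conc] sp by simp
  next
    assume z: "emeasure P1 (space P1 - S) = 0"
    show "absolutely_continuous P2 P1"
      unfolding absolutely_continuous_def
    proof
      fix A assume A: "A \<in> null_sets P2"
      have "A \<inter> S = {}"
      proof (rule ccontr)
        assume "A \<inter> S \<noteq> {}"
        then obtain s where s: "s \<in> A" "s \<in> S" by auto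
        have "emeasure P2 {s} \<le> emeasure P2 A"
          using A s sing by (intro emeasure_mono) auto
        then have "emeasure P2 {s} = 0" using A by auto
        then show False using pos[OF s(2)] by (simp add: P2.emeasure_eq_measure)
      qed
      then have "A \<subseteq> space P1 - S" using A sets.sets_into_space sp by fastforce
      then have "emeasure P1 A \<le> emeasure P1 (space P1 - S)"
        using Dsets sets_eq sp by (intro emeasure_mono) auto
      then show "A \<in> null_sets P1" using z A sets_eq by auto
    qed
  qed
  show "emeasure P1 (space P1 - S) \<noteq> 0 \<Longrightarrow> KL P1 P2 = \<infinity>"
    using ac by (simp add: KL_def)
  assume z: "emeasure P1 (space P1 - S) = 0"
  have acs: "absolutely_continuous P2 P1" using ac z by simp
  define g where "g = RN_deriv P2 P1"
  have gs: "enn2real (g s) = measure P1 {s} / measure P2 {s}" if s: "s \<in> S" for s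
  proof -
    have "emeasure P1 {s} = g s * emeasure P2 {s}"
      unfolding g_def using P2.RN_deriv_singleton[OF acs sets_eq sing[OF s]] .
    then have "enn2real (emeasure P1 {s}) = enn2real (g s * emeasure P2 {s})" by simp
    then have "measure P1 {s} = enn2real (g s) * measure P2 {s}"
      by (simp add: P1.emeasure_eq_measure P2.emeasure_eq_measure enn2real_mult)
    then show ?thesis using pos[OF s] by (simp add: field_simps)
  qed
  have ae: "AE z in P1. z \<in> S"
    by (rule AE_I'[where N="space P1 - S"]) (use z Dsets sets_eq sp in auto)
  have sing1: "\<And>s. s \<in> S \<Longrightarrow> {s} \<in> sets P1" using sing sets_eq by auto
  define t where "t s = measure P1 {s} * ln (measure P1 {s} / measure P2 {s})" for s
  have I1: "(\<integral>\<^sup>+z. ennreal (ln (enn2real (RN_deriv P2 P1 z))) \<partial>P1) = (\<Sum>s\<in>S. ennreal (t s))"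
    apply (subst nn_integral_finite_support[OF S ae sing1], assumption)
  proof (intro sum.cong refl)
    fix s assume s: "s \<in> S"
    have "ennreal (ln (enn2real (RN_deriv P2 P1 s))) * emeasure P1 {s}
       = ennreal (ln (measure P1 {s} / measure P2 {s})) * ennreal (measure P1 {s})"
      using gs[OF s] by (simp add: g_def P1.emeasure_eq_measure)
    also have "\<dots> = ennreal (t s)"
      by (subst ennreal_mult''[symmetric]) (auto simp: t_def mult.commute)
    finally show "ennreal (ln (enn2real (RN_deriv P2 P1 s))) * emeasure P1 {s} = ennreal (t s)" .
  qed
  have I2: "(\<integral>\<^sup>+z. ennreal (- ln (enn2real (RN_deriv P2 P1 z))) \<partial>P1) = (\<Sum>s\<in>S. ennreal (- t s))"
    apply (subst nn_integral_finite_support[OF S ae sing1], assumption)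
  proof (intro sum.cong refl)
    fix s assume s: "s \<in> S"
    have "ennreal (- ln (enn2real (RN_deriv P2 P1 s))) * emeasure P1 {s}
       = ennreal (- ln (measure P1 {s} / measure P2 {s})) * ennreal (measure P1 {s})"
      using gs[OF s] by (simp add: g_def P1.emeasure_eq_measure)
    also have "\<dots> = ennreal (- t s)"
      by (subst ennreal_mult''[symmetric]) (auto simp: t_def mult.commute)
    finally show "ennreal (- ln (enn2real (RN_deriv P2 P1 s))) * emeasure P1 {s} = ennreal (- t s)" .
  qed
  show "KL P1 P2 = ereal (\<Sum>s\<in>S. measure P1 {s} * ln (measure P1 {s} / measure P2 {s}))"
    using acs sets_eq unfolding KL_def I1 I2 ennreal_pos_neg_parts[OF S] t_def by simp
qed

lemma xlnx_nonneg:
  fixes r :: real assumes r: "0 \<le> r"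
  shows "0 \<le> r * ln r - r + 1"
proof (cases "r = 0")
  case False
  then have "0 < r" using r by simp
  have "ln (1/r) \<le> 1/r - 1" using \<open>0 < r\<close> by (intro ln_le_minus_one) simp
  then have "- ln r \<le> 1/r - 1" using \<open>0 < r\<close> by (simp add: ln_div)
  then have "r * (- ln r) \<le> r * (1/r - 1)" using \<open>0 < r\<close> by (intro mult_left_mono) auto
  moreover have "r * (1/r - 1) = 1 - r" using \<open>0 < r\<close> by (simp add: field_simps)
  ultimately show ?thesis by simp
qed simp

lemma xlnx_identity:
  fixes r :: real assumes r: "0 \<le> r"
  shows "ennreal (r * ln r) + 1 = ennreal (- (r * ln r)) + ennreal r + ennreal (r * ln r - r + 1)"
proof -
  have u: "0 \<le> r * ln r - r + 1" using xlnx_nonneg[OF r] .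
  show ?thesis
  proof (cases "0 \<le> r * ln r")
    case True
    have a: "ennreal (- (r * ln r)) = 0" using True by (intro ennreal_neg) simp
    have b: "ennreal r + ennreal (r * ln r - r + 1) = ennreal (r * ln r + 1)"
      by (subst ennreal_plus[symmetric]) (use r u in auto)
    have c: "ennreal (r * ln r + 1) = ennreal (r * ln r) + 1"
      using True by (subst ennreal_plus) auto
    show ?thesis using a b c by (simp add: add.assoc)
  next
    case False
    have a: "ennreal (r * ln r) = 0" using False by (intro ennreal_neg) simp
    have b: "ennreal (- (r * ln r)) + ennreal r + ennreal (r * ln r - r + 1) = ennreal 1"
      apply (subst ennreal_plus[symmetric], use False r in auto)
      apply (subst ennreal_plus[symmetric], use False r u in auto)
      done
    show ?thesis using a b by simp
  qed
qed

lemma xlnx_zero: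
  fixes r :: real assumes r: "0 \<le> r" and z: "r * ln r - r + 1 = 0"
  shows "r = 1"
proof (cases "r = 0")
  case True then show ?thesis using z by simp
next
  case False
  then have "0 < r" using r by simp
  have "ln (1/r) = 1/r - 1"
    using z \<open>0 < r\<close> by (simp add: ln_div field_simps)
  then have "1/r = 1" using \<open>0 < r\<close> by (intro ln_eq_minus_one) auto
  then show ?thesis by simp
qed

lemma KL_le_0_imp_eq:
  assumes P1: "prob_space P1" and P2: "prob_space P2" and sets_eq: "sets P1 = sets P2"
    and kl: "KL P1 P2 \<le> 0"
  shows "P1 = P2"
proof -
  interpret P1: prob_space P1 by fact
  interpret P2: prob_space P2 by fact
  have ac: "absolutely_continuous P2 P1"
  proof (rule ccontr)
    assume "\<not> ?thesis" then have "KL P1 P2 = \<infinity>" by (simp add: KL_def)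
    then show False using kl by simp
  qed
  define g where "g = RN_deriv P2 P1"
  have g_meas[measurable]: "g \<in> borel_measurable P2" unfolding g_def by simp
  have dens: "density P2 g = P1" unfolding g_def using P2.density_RN_deriv[OF ac sets_eq] .
  have fin: "AE x in P2. g x \<noteq> \<infinity>"
    unfolding g_def by (rule P2.RN_deriv_finite[OF _ ac sets_eq]) unfold_locales
  define r where "r x = enn2real (g x)" for x
  have r_meas[measurable]: "r \<in> borel_measurable P2" unfolding r_def by simp
  have r_nn: "0 \<le> r x" for x unfolding r_def by simp
  have gr: "AE x in P2. g x = ennreal (r x)"
    using fin by eventually_elim (simp add: r_def less_top[symmetric])
  define A where "A = (\<integral>\<^sup>+z. ennreal (ln (enn2real (RN_deriv P2 P1 z))) \<partial>P1)"
  define B where "B = (\<integral>\<^sup>+z. ennreal (- ln (enn2real (RN_deriv P2 P1 z))) \<partial>P1)"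
  have klAB: "KL P1 P2 = enn2ereal A - enn2ereal B"
    using ac sets_eq unfolding KL_def A_def B_def by simp
  have A2: "A = (\<integral>\<^sup>+z. ennreal (r z * ln (r z)) \<partial>P2)"
  proof -
    have "A = (\<integral>\<^sup>+z. ennreal (ln (r z)) \<partial>density P2 g)"
      unfolding A_def r_def g_def by (simp add: dens[unfolded g_def])
    also have "\<dots> = (\<integral>\<^sup>+z. g z * ennreal (ln (r z)) \<partial>P2)"
      by (rule nn_integral_density) auto
    also have "\<dots> = (\<integral>\<^sup>+z. ennreal (r z * ln (r z)) \<partial>P2)"
      by (rule nn_integral_cong_AE) (use gr in \<open>eventually_elim, simp add: ennreal_mult'[symmetric] r_nn\<close>)
    finally show ?thesis .
  qed
  have B2: "B = (\<integral>\<^sup>+z. ennreal (- (r z * ln (r z))) \<partial>P2)"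
  proof -
    have "B = (\<integral>\<^sup>+z. ennreal (- ln (r z)) \<partial>density P2 g)"
      unfolding B_def r_def g_def by (simp add: dens[unfolded g_def])
    also have "\<dots> = (\<integral>\<^sup>+z. g z * ennreal (- ln (r z)) \<partial>P2)"
      by (rule nn_integral_density) auto
    also have "\<dots> = (\<integral>\<^sup>+z. ennreal (- (r z * ln (r z))) \<partial>P2)"
      by (rule nn_integral_cong_AE) (use gr in \<open>eventually_elim, simp add: ennreal_mult'[symmetric] r_nn\<close>)
    finally show ?thesis .
  qed
  have R1: "(\<integral>\<^sup>+z. ennreal (r z) \<partial>P2) = 1"
  proof -
    have "(\<integral>\<^sup>+z. ennreal (r z) \<partial>P2) = (\<integral>\<^sup>+z. g z \<partial>P2)"
      by (rule nn_integral_cong_AE) (use gr in \<open>eventually_elim, simp\<close>)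
    also have "\<dots> = emeasure (density P2 g) (space P2)"
      by (simp add: emeasure_density)
    also have "\<dots> = 1" using dens P1.emeasure_space_1 sets_eq_imp_space_eq[OF sets_eq] by simp
    finally show ?thesis .
  qed
  define U where "U = (\<integral>\<^sup>+z. ennreal (r z * ln (r z) - r z + 1) \<partial>P2)"
  have iden: "A + 1 = B + 1 + U"
  proof -
    have "A + 1 = (\<integral>\<^sup>+z. ennreal (r z * ln (r z)) + 1 \<partial>P2)"
      unfolding A2 by (subst nn_integral_add) (auto simp: P2.emeasure_space_1)
    also have "\<dots> = (\<integral>\<^sup>+z. ennreal (- (r z * ln (r z))) + ennreal (r z) + ennreal (r z * ln (r z) - r z + 1) \<partial>P2)"
      by (intro nn_integral_cong) (simp add: xlnx_identity r_nn)
    also have "\<dots> = B + 1 + U"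
      unfolding B2 U_def R1[symmetric] by (subst nn_integral_add; simp)+
    finally show ?thesis .
  qed
  have Afin: "A \<noteq> \<infinity>"
  proof
    assume "A = \<infinity>"
    then have "B = \<infinity>" using kl klAB by (cases B) auto
    then show False using kl klAB \<open>A = \<infinity>\<close> by simp
  qed
  have Bfin: "B \<noteq> \<infinity>"
  proof
    assume "B = \<infinity>"
    then have "A + 1 = \<infinity>" using iden by simp
    then show False using Afin by (simp add: ennreal_add_eq_top)
  qed
  have AleB: "A \<le> B"
    using kl klAB Afin Bfin by (cases A; cases B) (auto simp: ereal_minus_le_iff)
  have U0: "U = 0"
  proof -
    have "B + 1 + U \<le> B + 1 + 0" using iden AleB by (metis add.right_neutral add_right_mono)
    moreover have "B + 1 \<noteq> \<infinity>" using Bfin by (simp add: ennreal_add_eq_top)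
    ultimately have "U \<le> 0" using ennreal_add_left_cancel_le by blast
    then show ?thesis by simp
  qed
  have "AE z in P2. ennreal (r z * ln (r z) - r z + 1) = 0"
    using U0 unfolding U_def by (subst (asm) nn_integral_0_iff_AE) auto
  then have r1: "AE z in P2. g z = 1"
    using gr
  proof eventually_elim
    case (elim z)
    have "0 \<le> r z * ln (r z) - r z + 1"
      using xlnx_nonneg[OF r_nn[of z]] .
    then have "r z * ln (r z) - r z + 1 = 0" using elim by simp
    then have "r z = 1" by (rule xlnx_zero[OF r_nn])
    then show ?case using elim by simp
  qed
  have "P1 = density P2 (\<lambda>_. 1)"
    unfolding dens[symmetric] by (rule density_cong) (use r1 in auto)
  also have "\<dots> = P2" by (rule density_1)
  finally show ?thesis .
qed

lemma abs_le_exp_bound: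
  fixes x d :: real assumes d: "0 < d"
  shows "\<bar>x\<bar> \<le> (exp (d * x) + exp (- d * x)) / d"
proof -
  have "d * \<bar>x\<bar> \<le> exp (d * \<bar>x\<bar>)" using exp_ge_add_one_self[of "d * \<bar>x\<bar>"] by linarith
  also have "\<dots> \<le> exp (d * x) + exp (- d * x)"
  proof (cases "0 \<le> x")
    case True
    then show ?thesis using exp_gt_zero[of "- d * x"] by simp
  next
    case False
    then show ?thesis using exp_gt_zero[of "d * x"] by simp
  qed
  finally show ?thesis using d by (simp add: field_simps)
qed

locale expfam =
  fixes nu :: "'y measure" and h :: "'y \<Rightarrow> real" and T :: "'y \<Rightarrow> 'p::euclidean_space"
  assumes hnn: "\<And>y. y \<in> space nu \<Longrightarrow> 0 \<le> h y"
    and hm[measurable]: "h \<in> borel_measurable nu"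
    and Tm[measurable]: "T \<in> borel_measurable nu"
    and reg: "regular_expfam nu h T"
begin

definition I :: "'p \<Rightarrow> ennreal" where
  "I \<theta> = (\<integral>\<^sup>+ y. ennreal (h y * exp (\<theta> \<bullet> T y)) \<partial>nu)"

abbreviation P :: "'p \<Rightarrow> 'y measure" where
  "P \<theta> \<equiv> density nu (\<lambda>y. ennreal (expfam_density nu h T \<theta> y))"

lemma Theta_open: "open (Theta nu h T)"
  using reg unfolding regular_expfam_def by simp

lemma I_fin: "\<theta> \<in> Theta nu h T \<Longrightarrow> I \<theta> < \<infinity>"
  unfolding Theta_def I_def by simp

lemma I_nz: "I \<theta> \<noteq> 0"
proof
  assume z: "I \<theta> = 0"
  have m: "(\<lambda>y. ennreal (h y * exp (\<theta> \<bullet> T y))) \<in> borel_measurable nu" by measurable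
  have "AE y in nu. ennreal (h y * exp (\<theta> \<bullet> T y)) = 0"
    using nn_integral_0_iff_AE[OF m] z unfolding I_def by blast
  then have "AE y in nu. h y \<noteq> 0 \<longrightarrow> (0::'p) \<bullet> T y = 1"
    using AE_space
  proof eventually_elim
    case (elim y)
    then have e: "ennreal (h y * exp (\<theta> \<bullet> T y)) = 0" and y: "y \<in> space nu" by auto
    from e have le: "h y * exp (\<theta> \<bullet> T y) \<le> 0" by (simp only: ennreal_eq_0_iff)
    have "h y = 0"
    proof (rule ccontr)
      assume "h y \<noteq> 0"
      then have "0 < h y" using hnn[OF y] by linarith
      then have "0 < h y * exp (\<theta> \<bullet> T y)" by (intro mult_pos_pos) auto
      then show False using le by linarith
    qed
    then show "h y \<noteq> 0 \<longrightarrow> (0::'p) \<bullet> T y = 1" by simp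
  qed
  moreover have "\<forall>a c. (AE y in nu. h y \<noteq> 0 \<longrightarrow> a \<bullet> T y = c) \<longrightarrow> a = 0 \<and> c = 0"
    using reg unfolding regular_expfam_def by (rule conjunct2)
  then have "(AE y in nu. h y \<noteq> 0 \<longrightarrow> (0::'p) \<bullet> T y = 1) \<longrightarrow> (0::'p) = 0 \<and> (1::real) = 0"
    by (elim allE)
  ultimately show False by simp
qed

lemma Psi_eq: "\<theta> \<in> Theta nu h T \<Longrightarrow> exp (Psi nu h T \<theta>) = enn2real (I \<theta>) \<and> 0 < enn2real (I \<theta>)"
proof -
  assume th: "\<theta> \<in> Theta nu h T"
  have pos: "0 < enn2real (I \<theta>)"
    using I_fin[OF th] I_nz[of \<theta>] by (simp add: enn2real_positive_iff less_top[symmetric] zero_less_iff_neq_zero)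
  then show ?thesis unfolding Psi_def I_def[symmetric] by simp
qed

lemma I_eq: "\<theta> \<in> Theta nu h T \<Longrightarrow> I \<theta> = ennreal (exp (Psi nu h T \<theta>))"
  using Psi_eq[of \<theta>] I_fin[of \<theta>] by simp

lemma dens_meas[measurable]: "expfam_density nu h T \<theta> \<in> borel_measurable nu"
  unfolding expfam_density_def[abs_def] by measurable

lemma dens_nn: "y \<in> space nu \<Longrightarrow> 0 \<le> expfam_density nu h T \<theta> y"
  unfolding expfam_density_def using hnn by simp

lemma moment:
  assumes th: "\<theta> \<in> Theta nu h T"
  shows "(\<integral>\<^sup>+ y. ennreal (expfam_density nu h T \<theta> y * exp (t * (T y \<bullet> v))) \<partial>nu)
          = I (\<theta> + t *\<^sub>R v) * ennreal (exp (- Psi nu h T \<theta>))"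
proof -
  have "(\<integral>\<^sup>+ y. ennreal (expfam_density nu h T \<theta> y * exp (t * (T y \<bullet> v))) \<partial>nu)
     = (\<integral>\<^sup>+ y. ennreal (h y * exp ((\<theta> + t *\<^sub>R v) \<bullet> T y)) * ennreal (exp (- Psi nu h T \<theta>)) \<partial>nu)"
  proof (intro nn_integral_cong)
    fix y
    have "expfam_density nu h T \<theta> y * exp (t * (T y \<bullet> v))
        = h y * exp ((\<theta> + t *\<^sub>R v) \<bullet> T y) * exp (- Psi nu h T \<theta>)"
      unfolding expfam_density_def
      by (simp only: mult.assoc mult_exp_exp inner_add_left inner_scaleR_left inner_commute[of v "T y"])
         (simp add: algebra_simps)
    then show "ennreal (expfam_density nu h T \<theta> y * exp (t * (T y \<bullet> v)))
       = ennreal (h y * exp ((\<theta> + t *\<^sub>R v) \<bullet> T y)) * ennreal (exp (- Psi nu h T \<theta>))"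
      by (simp add: ennreal_mult'')
  qed
  also have "\<dots> = I (\<theta> + t *\<^sub>R v) * ennreal (exp (- Psi nu h T \<theta>))"
    unfolding I_def by (rule nn_integral_multc) measurable
  finally show ?thesis .
qed

lemma prob_P: assumes th: "\<theta> \<in> Theta nu h T" shows "prob_space (P \<theta>)"
proof (rule prob_spaceI)
  have "emeasure (P \<theta>) (space (P \<theta>)) = emeasure (P \<theta>) (space nu)" by (simp only: space_density)
  also have "\<dots> = (\<integral>\<^sup>+ y. ennreal (expfam_density nu h T \<theta> y) * indicator (space nu) y \<partial>nu)"
    by (intro emeasure_density measurable_compose[OF dens_meas measurable_ennreal] sets.top)
  also have "\<dots> = (\<integral>\<^sup>+ y. ennreal (expfam_density nu h T \<theta> y * exp (0 * (T y \<bullet> 0))) \<partial>nu)"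
    by (intro nn_integral_cong) (simp add: indicator_def)
  also have "\<dots> = I (\<theta> + 0 *\<^sub>R 0) * ennreal (exp (- Psi nu h T \<theta>))" by (rule moment[OF th])
  also have "\<dots> = I \<theta> * ennreal (exp (- Psi nu h T \<theta>))" by simp
  also have "\<dots> = ennreal (exp (Psi nu h T \<theta>) * exp (- Psi nu h T \<theta>))"
    unfolding I_eq[OF th] by (rule ennreal_mult''[symmetric]) simp
  also have "\<dots> = 1" by (simp add: mult_exp_exp)
  finally show "emeasure (P \<theta>) (space (P \<theta>)) = 1" .
qed

end

context expfam
begin

lemma mean_T:
  assumes th: "\<theta> \<in> Theta nu h T"
    and der: "(Psi nu h T has_derivative (\<lambda>u. a \<bullet> u)) (at \<theta>)"
  shows "integrable (P \<theta>) (\<lambda>y. T y \<bullet> v) \<and> (\<integral>y. T y \<bullet> v \<partial>P \<theta>) = a \<bullet> v"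
proof -
  interpret Pt: prob_space "P \<theta>" by (rule prob_P[OF th])
  obtain r where r: "0 < r" "ball \<theta> r \<subseteq> Theta nu h T"
    using Theta_open th by (meson openE)
  define d where "d = r / (2 * (norm v + 1))"
  have d: "0 < d" unfolding d_def using r
    by (intro divide_pos_pos mult_pos_pos) (auto intro: add_nonneg_pos)
  have thv: "\<theta> + t *\<^sub>R v \<in> Theta nu h T" if t: "\<bar>t\<bar> \<le> d" for t
  proof -
    have "norm (t *\<^sub>R v) = \<bar>t\<bar> * norm v" by simp
    also have "\<dots> \<le> d * norm v" using t by (intro mult_right_mono) auto
    also have "d * norm v < r"
    proof -
      have e: "d * norm v = r * (norm v / (2 * (norm v + 1)))" by (simp add: d_def)
      have p: "0 < 2 * (norm v + 1)" by (smt (verit) norm_ge_zero)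
      have "norm v / (2 * (norm v + 1)) < 1"
        by (subst pos_divide_less_eq[OF p]) (smt (verit) norm_ge_zero)
      then have "r * (norm v / (2 * (norm v + 1))) < r * 1" using r by (intro mult_strict_left_mono) auto
      then show ?thesis using e by simp
    qed
    finally have "dist \<theta> (\<theta> + t *\<^sub>R v) < r" by (simp add: dist_norm)
    then show ?thesis using r by auto
  qed
  define f where "f = expfam_density nu h T \<theta>"
  define X where "X y = T y \<bullet> v" for y
  have Pf: "P \<theta> = density nu (\<lambda>y. ennreal (f y))" unfolding f_def ..
  have Xm[measurable]: "X \<in> borel_measurable nu" unfolding X_def by measurable
  have fm[measurable]: "f \<in> borel_measurable nu" unfolding f_def by (rule dens_meas)
  have fnn: "0 \<le> f y" if "y \<in> space nu" for y unfolding f_def using that by (rule dens_nn)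
  have fnnAE: "AE y in nu. 0 \<le> f y" using fnn by (intro AE_I2)
  have nnint: "(\<integral>\<^sup>+y. ennreal (f y * exp (t * X y)) \<partial>nu) = I (\<theta> + t *\<^sub>R v) * ennreal (exp (- Psi nu h T \<theta>))" for t
    unfolding f_def X_def by (rule moment[OF th])
  have int_exp: "integrable nu (\<lambda>y. f y * exp (t * X y))" if t: "\<bar>t\<bar> \<le> d" for t
  proof (rule integrableI_nonneg)
    show "(\<lambda>y. f y * exp (t * X y)) \<in> borel_measurable nu" by measurable
    show "AE y in nu. 0 \<le> f y * exp (t * X y)" using fnnAE by eventually_elim simp
    have "I (\<theta> + t *\<^sub>R v) * ennreal (exp (- Psi nu h T \<theta>)) < \<infinity>"
      using I_fin[OF thv[OF t]] by (simp add: ennreal_mult_less_top)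
    then show "(\<integral>\<^sup>+y. ennreal (f y * exp (t * X y)) \<partial>nu) < \<infinity>" unfolding nnint .
  qed
  have int_fX: "integrable nu (\<lambda>y. f y * X y)"
  proof (rule Bochner_Integration.integrable_bound)
    show "integrable nu (\<lambda>y. (f y * exp (d * X y) + f y * exp (- d * X y)) / d)"
      using int_exp[of d] int_exp[of "-d"] d by (intro integrable_divide_zero Bochner_Integration.integrable_add) auto
    show "(\<lambda>y. f y * X y) \<in> borel_measurable nu" by measurable
    show "AE y in nu. norm (f y * X y) \<le> norm ((f y * exp (d * X y) + f y * exp (- d * X y)) / d)"
    proof (rule AE_I2)
      fix y assume y: "y \<in> space nu"
      have "norm (f y * X y) = f y * \<bar>X y\<bar>" using fnn[OF y] by (simp add: abs_mult)
      also have "\<dots> \<le> f y * ((exp (d * X y) + exp (- d * X y)) / d)"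
        using fnn[OF y] abs_le_exp_bound[OF d] by (intro mult_left_mono) auto
      also have "\<dots> = (f y * exp (d * X y) + f y * exp (- d * X y)) / d"
        by (simp add: distrib_left)
      also have "\<dots> \<le> norm ((f y * exp (d * X y) + f y * exp (- d * X y)) / d)"
        by (simp only: real_norm_def abs_ge_self)
      finally show "norm (f y * X y) \<le> norm ((f y * exp (d * X y) + f y * exp (- d * X y)) / d)" .
    qed
  qed
  have intX: "integrable (P \<theta>) X"
    unfolding Pf using int_fX by (subst integrable_density) (simp_all add: fnnAE)
  have intE: "integrable (P \<theta>) (\<lambda>y. exp (t * X y))" if t: "\<bar>t\<bar> \<le> d" for t
    unfolding Pf using int_exp[OF t] by (subst integrable_density) (simp_all add: fnnAE)
  have valE: "(\<integral>y. exp (t * X y) \<partial>P \<theta>) = exp (Psi nu h T (\<theta> + t *\<^sub>R v) - Psi nu h T \<theta>)"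
    if t: "\<bar>t\<bar> \<le> d" for t
  proof -
    have "(\<integral>y. exp (t * X y) \<partial>P \<theta>) = (\<integral>y. f y * exp (t * X y) \<partial>nu)"
      unfolding Pf by (subst integral_density) (simp_all add: fnnAE)
    also have "\<dots> = enn2real (\<integral>\<^sup>+y. ennreal (f y * exp (t * X y)) \<partial>nu)"
      by (rule integral_eq_nn_integral) (measurable, use fnnAE in \<open>eventually_elim, simp\<close>)
    also have "\<dots> = enn2real (ennreal (exp (Psi nu h T (\<theta> + t *\<^sub>R v)) * exp (- Psi nu h T \<theta>)))"
      unfolding nnint I_eq[OF thv[OF t]] by (subst ennreal_mult'') simp_all
    also have "\<dots> = exp (Psi nu h T (\<theta> + t *\<^sub>R v) - Psi nu h T \<theta>)"
      by (simp add: mult_exp_exp)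
    finally show ?thesis .
  qed
  have sp1: "measure (P \<theta>) (space nu) = 1" using Pt.prob_space by simp
  define m where "m = (\<integral>y. X y \<partial>P \<theta>)"
  have key: "t * m \<le> Psi nu h T (\<theta> + t *\<^sub>R v) - Psi nu h T \<theta>" if t: "\<bar>t\<bar> \<le> d" for t
  proof -
    have eqf: "(\<lambda>y. exp (t * m) * (1 + t * (X y - m))) = (\<lambda>y. exp (t * m) * (1 - t * m) + (exp (t * m) * t) * X y)"
      by (rule ext) (simp add: algebra_simps)
    have intL: "integrable (P \<theta>) (\<lambda>y. exp (t * m) * (1 - t * m) + (exp (t * m) * t) * X y)"
      using intX by (intro Bochner_Integration.integrable_add integrable_mult_right) auto
    have "(\<integral>y. exp (t * m) * (1 + t * (X y - m)) \<partial>P \<theta>)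
        = (\<integral>y. exp (t * m) * (1 - t * m) + (exp (t * m) * t) * X y \<partial>P \<theta>)"
      by (simp only: eqf)
    also have "\<dots> = exp (t * m) * (1 - t * m) + (exp (t * m) * t) * m"
      unfolding m_def using intX
      by (subst Bochner_Integration.integral_add) (auto simp: sp1)
    also have "\<dots> = exp (t * m)" by (simp add: algebra_simps)
    finally have L: "(\<integral>y. exp (t * m) * (1 + t * (X y - m)) \<partial>P \<theta>) = exp (t * m)" .
    have "(\<integral>y. exp (t * m) * (1 + t * (X y - m)) \<partial>P \<theta>) \<le> (\<integral>y. exp (t * X y) \<partial>P \<theta>)"
    proof (rule integral_mono)
      show "integrable (P \<theta>) (\<lambda>y. exp (t * m) * (1 + t * (X y - m)))" unfolding eqf by (rule intL)
      show "integrable (P \<theta>) (\<lambda>y. exp (t * X y))" by (rule intE[OF t])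
      fix y
      have "exp (t * m) * (1 + t * (X y - m)) \<le> exp (t * m) * exp (t * (X y - m))"
        by (intro mult_left_mono exp_ge_add_one_self) simp
      also have "\<dots> = exp (t * X y)" by (simp add: mult_exp_exp algebra_simps)
      finally show "exp (t * m) * (1 + t * (X y - m)) \<le> exp (t * X y)" .
    qed
    then have "exp (t * m) \<le> exp (Psi nu h T (\<theta> + t *\<^sub>R v) - Psi nu h T \<theta>)"
      unfolding L valE[OF t] .
    then show ?thesis by simp
  qed
  have D: "((\<lambda>t. Psi nu h T (\<theta> + t *\<^sub>R v) - t * m) has_real_derivative (a \<bullet> v - m)) (at 0)"
  proof -
    have l: "((\<lambda>t::real. \<theta> + t *\<^sub>R v) has_derivative (\<lambda>t. t *\<^sub>R v)) (at 0)"
      by (auto intro!: derivative_eq_intros)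
    have der0: "(Psi nu h T has_derivative (\<lambda>u. a \<bullet> u)) (at (\<theta> + (0::real) *\<^sub>R v))"
      using der by simp
    have "((\<lambda>t. Psi nu h T (\<theta> + t *\<^sub>R v)) has_derivative (\<lambda>t. a \<bullet> (t *\<^sub>R v))) (at 0)"
      using has_derivative_compose[OF l der0] by simp
    then have "((\<lambda>t. Psi nu h T (\<theta> + t *\<^sub>R v)) has_real_derivative (a \<bullet> v)) (at 0)"
      by (rule has_derivative_imp_has_field_derivative) simp
    then show ?thesis by (auto intro!: derivative_eq_intros)
  qed
  have "a \<bullet> v - m = 0"
  proof (rule DERIV_local_min[OF D d], intro allI impI)
    fix t :: real assume "\<bar>0 - t\<bar> < d"
    then have "\<bar>t\<bar> \<le> d" by simp
    from key[OF this] show "Psi nu h T (\<theta> + 0 *\<^sub>R v) - 0 * m \<le> Psi nu h T (\<theta> + t *\<^sub>R v) - t * m"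
      by simp
  qed
  then show ?thesis using intX unfolding m_def X_def by simp
qed

end

lemma slice_measure:
  fixes MX :: "'x measure" and MY :: "'y measure"
  assumes Qs: "sets Q = sets (MX \<Otimes>\<^sub>M MY)"
    and Ps: "sets Pc = sets MY" and x: "{x} \<in> sets MX" and q: "0 \<le> q"
    and rect: "\<And>A. A \<in> sets MY \<Longrightarrow> emeasure Q ({x} \<times> A) = ennreal q * emeasure Pc A"
  shows "density Q (indicator ({x} \<times> space MY)) = distr (density Pc (\<lambda>_. ennreal q)) (MX \<Otimes>\<^sub>M MY) (\<lambda>y. (x, y))"
proof -
  have xs: "x \<in> space MX" using sets.sets_into_space[OF x] by auto
  have Pm: "(\<lambda>y. (x, y)) \<in> measurable MY (MX \<Otimes>\<^sub>M MY)"
    using xs by (intro measurable_Pair measurable_const measurable_ident) auto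
  have Pm': "(\<lambda>y. (x, y)) \<in> measurable (density Pc (\<lambda>_. ennreal q)) (MX \<Otimes>\<^sub>M MY)"
    using Pm by (subst measurable_cong_sets[OF _ refl, where M'=MY]) (auto simp: Ps)
  have sl: "{x} \<times> space MY \<in> sets Q" unfolding Qs by (intro pair_measureI x sets.top)
  show ?thesis
  proof (rule measure_eqI)
    show "sets (density Q (indicator ({x} \<times> space MY))) = sets (distr (density Pc (\<lambda>_. ennreal q)) (MX \<Otimes>\<^sub>M MY) (\<lambda>y. (x, y)))"
      using Qs by simp
    fix A assume "A \<in> sets (density Q (indicator ({x} \<times> space MY)))"
    then have A: "A \<in> sets (MX \<Otimes>\<^sub>M MY)" using Qs by simp
    define Ac where "Ac = (\<lambda>y. (x, y)) -` A \<inter> space MY"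
    have Ac: "Ac \<in> sets MY" unfolding Ac_def using measurable_sets[OF Pm A] .
    have "A \<subseteq> space MX \<times> space MY" using sets.sets_into_space[OF A] by (simp add: space_pair_measure)
    then have eq: "({x} \<times> space MY) \<inter> A = {x} \<times> Ac" unfolding Ac_def by auto
    have "emeasure (density Q (indicator ({x} \<times> space MY))) A = emeasure Q (({x} \<times> space MY) \<inter> A)"
      by (rule emeasure_restricted[OF sl]) (use A Qs in simp)
    also have "\<dots> = ennreal q * emeasure Pc Ac" unfolding eq by (rule rect[OF Ac])
    also have "\<dots> = emeasure (density Pc (\<lambda>_. ennreal q)) Ac"
      by (rule emeasure_density_const[symmetric]) (use Ac Ps in simp)
    also have "\<dots> = emeasure (distr (density Pc (\<lambda>_. ennreal q)) (MX \<Otimes>\<^sub>M MY) (\<lambda>y. (x, y))) A"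
      using Pm' A sets_eq_imp_space_eq[OF Ps] unfolding Ac_def by (subst emeasure_distr) auto
    finally show "emeasure (density Q (indicator ({x} \<times> space MY))) A =
       emeasure (distr (density Pc (\<lambda>_. ennreal q)) (MX \<Otimes>\<^sub>M MY) (\<lambda>y. (x, y))) A" .
  qed
qed

lemma slice_integral:
  fixes MX :: "'x measure" and MY :: "'y measure" and F :: "'x \<times> 'y \<Rightarrow> real"
  assumes Qs: "sets Q = sets (MX \<Otimes>\<^sub>M MY)"
    and Ps: "sets Pc = sets MY" and x: "{x} \<in> sets MX" and q: "0 \<le> q"
    and rect: "\<And>A. A \<in> sets MY \<Longrightarrow> emeasure Q ({x} \<times> A) = ennreal q * emeasure Pc A"
    and Fm[measurable]: "F \<in> borel_measurable (MX \<Otimes>\<^sub>M MY)"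
    and Fi: "integrable Pc (\<lambda>y. F (x, y))"
  shows "integrable Q (\<lambda>z. indicator ({x} \<times> space MY) z * F z)"
    and "(\<integral>z. indicator ({x} \<times> space MY) z * F z \<partial>Q) = q * (\<integral>y. F (x, y) \<partial>Pc)"
proof -
  have xs: "x \<in> space MX" using sets.sets_into_space[OF x] by auto
  have Pm: "(\<lambda>y. (x, y)) \<in> measurable MY (MX \<Otimes>\<^sub>M MY)"
    using xs by (intro measurable_Pair measurable_const measurable_ident) auto
  have Pm': "(\<lambda>y. (x, y)) \<in> measurable (density Pc (\<lambda>_. ennreal q)) (MX \<Otimes>\<^sub>M MY)"
    using Pm by (subst measurable_cong_sets[OF _ refl, where M'=MY]) (auto simp: Ps)
  have Pm'': "(\<lambda>y. (x, y)) \<in> measurable Pc (MX \<Otimes>\<^sub>M MY)"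
    using Pm by (subst measurable_cong_sets[OF Ps refl])
  have FQ[measurable]: "F \<in> borel_measurable Q" using Fm by (subst measurable_cong_sets[OF Qs refl])
  have sl: "{x} \<times> space MY \<in> sets Q" unfolding Qs by (intro pair_measureI x sets.top)
  have D: "density Q (\<lambda>z. ennreal (indicator ({x} \<times> space MY) z)) = distr (density Pc (\<lambda>_. ennreal q)) (MX \<Otimes>\<^sub>M MY) (\<lambda>y. (x, y))"
    unfolding ennreal_indicator by (rule slice_measure[OF Qs Ps x q rect])
  have Fc: "(\<lambda>y. F (x, y)) \<in> borel_measurable Pc" using Pm'' by measurable
  have i1: "integrable Q (\<lambda>z. indicator ({x} \<times> space MY) z *\<^sub>R F z) \<longleftrightarrow>
      integrable (density Q (\<lambda>z. ennreal (indicator ({x} \<times> space MY) z))) F"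
    by (rule integrable_density[symmetric]) (use sl in auto)
  also have "\<dots> \<longleftrightarrow> integrable (density Pc (\<lambda>_. ennreal q)) (\<lambda>y. F (x, y))"
    unfolding D by (rule integrable_distr_eq[OF Pm' Fm])
  also have "\<dots> \<longleftrightarrow> integrable Pc (\<lambda>y. q *\<^sub>R F (x, y))"
    by (rule integrable_density) (use q Fc in auto)
  finally show "integrable Q (\<lambda>z. indicator ({x} \<times> space MY) z * F z)"
    using Fi by simp
  have "(\<integral>z. indicator ({x} \<times> space MY) z * F z \<partial>Q) = (\<integral>z. indicator ({x} \<times> space MY) z *\<^sub>R F z \<partial>Q)"
    by simp
  also have "\<dots> = (\<integral>z. F z \<partial>density Q (\<lambda>z. ennreal (indicator ({x} \<times> space MY) z)))"
    by (rule integral_density[symmetric]) (use sl in auto)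
  also have "\<dots> = (\<integral>y. F (x, y) \<partial>density Pc (\<lambda>_. ennreal q))"
    unfolding D by (rule integral_distr[OF Pm' Fm])
  also have "\<dots> = (\<integral>y. q *\<^sub>R F (x, y) \<partial>Pc)"
    by (rule integral_density) (use q Fc in auto)
  also have "\<dots> = q * (\<integral>y. F (x, y) \<partial>Pc)" by simp
  finally show "(\<integral>z. indicator ({x} \<times> space MY) z * F z \<partial>Q) = q * (\<integral>y. F (x, y) \<partial>Pc)" .
qed

lemma integral_slices:
  fixes MX :: "'x measure" and MY :: "'y measure" and F :: "'x \<times> 'y \<Rightarrow> real"
    and xh :: "nat \<Rightarrow> 'x" and Pc :: "nat \<Rightarrow> 'y measure" and q :: "nat \<Rightarrow> real"
  assumes Q: "prob_space Q" and Qs: "sets Q = sets (MX \<Otimes>\<^sub>M MY)"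
    and Pp: "\<And>c. c < N \<Longrightarrow> prob_space (Pc c)" and Ps: "\<And>c. c < N \<Longrightarrow> sets (Pc c) = sets MY"
    and xs: "\<And>c. c < N \<Longrightarrow> {xh c} \<in> sets MX"
    and inj: "inj_on xh {..<N}"
    and q: "\<And>c. c < N \<Longrightarrow> 0 \<le> q c" and qs: "(\<Sum>c<N. q c) = 1"
    and rect: "\<And>c A. c < N \<Longrightarrow> A \<in> sets MY \<Longrightarrow> emeasure Q ({xh c} \<times> A) = ennreal (q c) * emeasure (Pc c) A"
    and Fm[measurable]: "F \<in> borel_measurable (MX \<Otimes>\<^sub>M MY)"
    and Fi: "\<And>c. c < N \<Longrightarrow> integrable (Pc c) (\<lambda>y. F (xh c, y))"
  shows "(\<integral>z. F z \<partial>Q) = (\<Sum>c<N. q c * (\<integral>y. F (xh c, y) \<partial>Pc c))"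
proof -
  interpret Q: prob_space Q by fact
  define S where "S c = {xh c} \<times> space MY" for c
  have Ssets: "S c \<in> sets Q" if "c < N" for c
    unfolding S_def Qs using that by (intro pair_measureI xs sets.top)
  have mS: "measure Q (S c) = q c" if c: "c < N" for c
  proof -
    interpret Pc: prob_space "Pc c" using Pp[OF c] .
    have "emeasure Q (S c) = ennreal (q c) * emeasure (Pc c) (space MY)"
      unfolding S_def by (rule rect[OF c sets.top])
    also have "\<dots> = ennreal (q c)"
      using Pc.emeasure_space_1 sets_eq_imp_space_eq[OF Ps[OF c]] by simp
    finally show ?thesis using q[OF c] by (simp add: Q.emeasure_eq_measure)
  qed
  have disj: "disjoint_family_on S {..<N}"
    unfolding disjoint_family_on_def S_def using inj by (auto simp: inj_on_def)
  have "measure Q (\<Union>c\<in>{..<N}. S c) = (\<Sum>c<N. measure Q (S c))"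
    by (rule Q.finite_measure_finite_Union) (use Ssets disj in auto)
  also have "\<dots> = 1" using mS qs by simp
  finally have "AE z in Q. z \<in> (\<Union>c\<in>{..<N}. S c)" by (rule Q.AE_prob_1)
  then have ae: "AE z in Q. F z = (\<Sum>c<N. indicator (S c) z * F z)"
  proof eventually_elim
    case (elim z)
    then obtain c where c: "c < N" "z \<in> S c" by auto
    have "(\<Sum>c'<N. indicator (S c') z * F z) = (\<Sum>c'<N. if c' = c then F z else 0)"
    proof (intro sum.cong refl)
      fix c' assume c': "c' \<in> {..<N}"
      show "indicator (S c') z * F z = (if c' = c then F z else 0)"
      proof (cases "c' = c")
        case False
        then have "z \<notin> S c'" using disj c c' unfolding disjoint_family_on_def by auto
        then show ?thesis using False by simp
      qed (use c in simp)
    qed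
    also have "\<dots> = F z" using c by simp
    finally show ?case by simp
  qed
  have FQ[measurable]: "F \<in> borel_measurable Q" using Fm by (subst measurable_cong_sets[OF Qs refl])
  have si: "integrable Q (\<lambda>z. indicator (S c) z * F z) \<and>
      (\<integral>z. indicator (S c) z * F z \<partial>Q) = q c * (\<integral>y. F (xh c, y) \<partial>Pc c)" if c: "c < N" for c
    using slice_integral[OF Qs Ps[OF c] xs[OF c] q[OF c] rect[OF c] Fm Fi[OF c]] unfolding S_def by simp
  have "(\<integral>z. F z \<partial>Q) = (\<integral>z. (\<Sum>c<N. indicator (S c) z * F z) \<partial>Q)"
    by (rule integral_cong_AE) (use ae Ssets in auto)
  also have "\<dots> = (\<Sum>c<N. (\<integral>z. indicator (S c) z * F z \<partial>Q))"
    by (rule Bochner_Integration.integral_sum[where f="\<lambda>c z. indicator (S c) z * F z"]) (use si in auto)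
  also have "\<dots> = (\<Sum>c<N. q c * (\<integral>y. F (xh c, y) \<partial>Pc c))"
    by (intro sum.cong refl) (use si in auto)
  finally show ?thesis .
qed

lemma pmf_distr_facts:
  fixes p :: "nat pmf" and K :: "'a measure" and g :: "nat \<Rightarrow> 'a"
  assumes sp: "set_pmf p \<subseteq> {..<N}" and gK: "\<And>i. i < N \<Longrightarrow> g i \<in> space K" and N: "1 \<le> N"
  shows "prob_space (distr p K g)" and "sets (distr p K g) = sets K"
    and "\<And>A. A \<in> sets K \<Longrightarrow> emeasure (distr p K g) A = ennreal (\<Sum>i\<in>{i. i < N \<and> g i \<in> A}. pmf p i)"
proof -
  define g' where "g' i = (if i < N then g i else g 0)" for i
  have g'm: "g' \<in> measurable (measure_pmf p) K" using gK N by (auto simp: g'_def)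
  have pre: "emeasure p (g -` A \<inter> space p) = emeasure p (g' -` A \<inter> space p)" for A
  proof -
    have "emeasure p (g -` A \<inter> space p) = emeasure p ((g -` A \<inter> space p) \<inter> set_pmf p)"
      by (simp add: emeasure_Int_set_pmf)
    also have "(g -` A \<inter> space p) \<inter> set_pmf p = (g' -` A \<inter> space p) \<inter> set_pmf p"
      using sp by (auto simp: g'_def)
    also have "emeasure p ((g' -` A \<inter> space p) \<inter> set_pmf p) = emeasure p (g' -` A \<inter> space p)"
      by (simp add: emeasure_Int_set_pmf)
    finally show ?thesis .
  qed
  have eq: "distr p K g = distr p K g'" unfolding distr_def pre ..
  show "prob_space (distr p K g)" unfolding eq by (rule measure_pmf.prob_space_distr[OF g'm])
  show "sets (distr p K g) = sets K" by simp
  fix A assume A: "A \<in> sets K"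
  have "emeasure (distr p K g) A = emeasure p (g' -` A \<inter> space p)"
    unfolding eq by (rule emeasure_distr[OF g'm A])
  also have "\<dots> = emeasure p ((g' -` A \<inter> space p) \<inter> set_pmf p)" by (simp add: emeasure_Int_set_pmf)
  also have "(g' -` A \<inter> space p) \<inter> set_pmf p = {i. i < N \<and> g i \<in> A} \<inter> set_pmf p"
    using sp by (auto simp: g'_def)
  also have "emeasure p ({i. i < N \<and> g i \<in> A} \<inter> set_pmf p) = emeasure p {i. i < N \<and> g i \<in> A}"
    by (simp add: emeasure_Int_set_pmf)
  also have "\<dots> = ennreal (\<Sum>i\<in>{i. i < N \<and> g i \<in> A}. pmf p i)"
    by (rule emeasure_measure_pmf_finite) simp
  finally show "emeasure (distr p K g) A = ennreal (\<Sum>i\<in>{i. i < N \<and> g i \<in> A}. pmf p i)" .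
qed

lemma pmf_distr_point:
  fixes p :: "nat pmf" and K :: "'a measure" and g :: "nat \<Rightarrow> 'a"
  assumes sp: "set_pmf p \<subseteq> {..<N}" and gK: "\<And>i. i < N \<Longrightarrow> g i \<in> space K" and N: "1 \<le> N"
    and inj: "inj_on g {..<N}" and c: "c < N" and sing: "{g c} \<in> sets K"
  shows "measure (distr p K g) {g c} = pmf p c"
proof -
  interpret D: prob_space "distr p K g" by (rule pmf_distr_facts(1)[OF sp gK N])
  have e1: "{i. i < N \<and> g i \<in> {g c}} = {c}" using inj c by (auto simp: inj_on_def)
  have "emeasure (distr p K g) {g c} = ennreal (\<Sum>i\<in>{i. i < N \<and> g i \<in> {g c}}. pmf p i)"
    by (rule pmf_distr_facts(3)[of p N g K, OF sp gK N sing])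
  then have "emeasure (distr p K g) {g c} = ennreal (pmf p c)" unfolding e1 by simp
  then show ?thesis by (simp add: D.emeasure_eq_measure)
qed

lemma pmf_distr_conc:
  fixes p :: "nat pmf" and K :: "'a measure" and g :: "nat \<Rightarrow> 'a"
  assumes sp: "set_pmf p \<subseteq> {..<N}" and gK: "\<And>i. i < N \<Longrightarrow> g i \<in> space K" and N: "1 \<le> N"
    and sing: "\<And>c. c < N \<Longrightarrow> {g c} \<in> sets K"
  shows "emeasure (distr p K g) (space K - g ` {..<N}) = 0"
proof -
  have "g ` {..<N} \<in> sets K"
    by (rule finite_set_in_sets) (simp, erule imageE, simp add: sing)
  then have A: "space K - g ` {..<N} \<in> sets K" by (rule sets.Diff[OF sets.top])
  have emp: "{i. i < N \<and> g i \<in> space K - g ` {..<N}} = {}" by blast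
  have "emeasure (distr p K g) (space K - g ` {..<N}) = ennreal (\<Sum>i\<in>{i. i < N \<and> g i \<in> space K - g ` {..<N}}. pmf p i)"
    by (rule pmf_distr_facts(3)[of p N g K, OF sp gK N A])
  then show ?thesis unfolding emp by simp
qed

lemma mk_pmf:
  fixes q :: "nat \<Rightarrow> real"
  assumes q: "\<And>c. c < N \<Longrightarrow> 0 \<le> q c" and qs: "(\<Sum>c<N. q c) = 1"
  shows "\<exists>p::nat pmf. set_pmf p \<subseteq> {..<N} \<and> (\<forall>c<N. pmf p c = q c)"
proof -
  define f where "f i = (if i < N then q i else 0)" for i
  have fnn: "0 \<le> f x" for x using q by (simp add: f_def)
  have "(\<integral>\<^sup>+ x. ennreal (f x) \<partial>count_space UNIV) = (\<Sum>x<N. ennreal (f x))"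
    by (rule nn_integral_count_space') (auto simp: f_def)
  also have "\<dots> = ennreal (\<Sum>x<N. f x)" by (rule sum_ennreal) (simp add: fnn)
  also have "(\<Sum>x<N. f x) = 1" using qs by (simp add: f_def)
  finally have one: "(\<integral>\<^sup>+ x. ennreal (f x) \<partial>count_space UNIV) = 1" by simp
  define p where "p = embed_pmf f"
  have "set_pmf p \<subseteq> {..<N}" unfolding p_def set_embed_pmf[OF fnn one] by (auto simp: f_def)
  moreover have "\<forall>c<N. pmf p c = q c" unfolding p_def pmf_embed_pmf[OF fnn one] by (simp add: f_def)
  ultimately show ?thesis by blast
qed

lemma KL_self:
  assumes P: "prob_space P" shows "KL P P = 0"
proof -
  interpret prob_space P by fact
  have ac: "absolutely_continuous P P" unfolding absolutely_continuous_def by simp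
  have "AE x in P. (\<lambda>_. 1) x = RN_deriv P P x"
    by (rule RN_deriv_unique) (auto simp: density_1)
  then have ae: "AE x in P. RN_deriv P P x = 1" by auto
  have 1: "(\<integral>\<^sup>+z. ennreal (ln (enn2real (RN_deriv P P z))) \<partial>P) = 0"
    by (subst nn_integral_cong_AE[where v="\<lambda>_. 0"]) (use ae in \<open>eventually_elim, simp\<close>, simp)
  have 2: "(\<integral>\<^sup>+z. ennreal (- ln (enn2real (RN_deriv P P z))) \<partial>P) = 0"
    by (subst nn_integral_cong_AE[where v="\<lambda>_. 0"]) (use ae in \<open>eventually_elim, simp\<close>, simp)
  show ?thesis unfolding KL_def using ac 1 2 by simp
qed

lemma sum_points_one:
  fixes g :: "nat \<Rightarrow> 'a"
  assumes Q: "prob_space Q" and sing: "\<And>c. c < N \<Longrightarrow> {g c} \<in> sets Q"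
    and inj: "inj_on g {..<N}" and conc: "emeasure Q (space Q - g ` {..<N}) = 0"
  shows "(\<Sum>c<N. measure Q {g c}) = 1"
proof -
  interpret prob_space Q by fact
  have S: "g ` {..<N} \<in> sets Q"
    by (rule finite_set_in_sets) (simp, erule imageE, simp add: sing)
  have "measure Q (\<Union>c\<in>{..<N}. {g c}) = (\<Sum>c<N. measure Q {g c})"
    by (rule finite_measure_finite_Union) (use sing inj in \<open>auto simp: disjoint_family_on_def inj_on_def\<close>)
  moreover have "(\<Union>c\<in>{..<N}. {g c}) = g ` {..<N}" by auto
  moreover have "measure Q (space Q - g ` {..<N}) = 0" using conc by (simp add: emeasure_eq_measure)
  then have "measure Q (g ` {..<N}) = 1" using prob_compl[OF S] by simp
  ultimately show ?thesis by simp
qed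

locale drset = expfam nu h T
  for nu :: "'y::euclidean_space measure" and h :: "'y \<Rightarrow> real" and T :: "'y \<Rightarrow> 'p::euclidean_space" +
  fixes Xcal :: "'x::euclidean_space set" and Ycal :: "'y set" and lam :: "'w \<Rightarrow> 'x \<Rightarrow> 'p"
    and N :: nat and xh :: "nat \<Rightarrow> 'x" and yh :: "nat \<Rightarrow> 'y" and th :: "nat \<Rightarrow> 'p"
    and eps :: real and w :: 'w
  assumes nu_sets: "sets nu = sets (restrict_space borel Ycal)"
    and lamT: "\<And>x. x \<in> Xcal \<Longrightarrow> lam w x \<in> Theta nu h T"
    and N_pos: "1 \<le> N"
    and xh_in: "\<And>i. i < N \<Longrightarrow> xh i \<in> Xcal" and yh_in: "\<And>i. i < N \<Longrightarrow> yh i \<in> Ycal"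
    and xinj: "inj_on xh {..<N}"
    and eps_nn: "0 \<le> eps"
    and thT: "\<And>c. c < N \<Longrightarrow> th c \<in> Theta nu h T"
    and thg: "\<And>c. c < N \<Longrightarrow> (Psi nu h T has_derivative (\<lambda>v. T (yh c) \<bullet> v)) (at (th c))"
begin

abbreviation "MX \<equiv> restrict_space (borel :: 'x measure) Xcal"
abbreviation "MY \<equiv> restrict_space (borel :: 'y measure) Ycal"
abbreviation "MM \<equiv> MX \<Otimes>\<^sub>M MY"
abbreviation "PX \<equiv> distr (measure_pmf (pmf_of_set {..<N})) MX xh"
abbreviation "Pemp \<equiv> distr (measure_pmf (pmf_of_set {..<N})) MM (\<lambda>i. (xh i, yh i))"
abbreviation "FF \<equiv> (\<lambda>z. ell_loss nu h T lam (fst z) (snd z) w)"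
abbreviation "ell c \<equiv> ell_loss nu h T lam (xh c) (yh c) w"
abbreviation "gp \<equiv> (\<lambda>i. (xh i, yh i))"

definition Vq :: "(nat \<Rightarrow> real) \<Rightarrow> bool" where
  "Vq q \<longleftrightarrow> (\<forall>c<N. 0 \<le> q c) \<and> (\<Sum>c<N. q c) = 1 \<and> (\<Sum>c<N. q c * ln (q c / (1 / real N))) \<le> eps"

lemma spnu: "space nu = Ycal"
  using sets_eq_imp_space_eq[OF nu_sets] by (simp add: space_restrict_space)

lemma spX: "space MX = Xcal" by (simp add: space_restrict_space)
lemma spY: "space MY = Ycal" by (simp add: space_restrict_space)
lemma spM: "space MM = Xcal \<times> Ycal" by (simp add: space_pair_measure space_restrict_space)

lemma sX: "c < N \<Longrightarrow> {xh c} \<in> sets MX"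
  using xh_in[of c] by (auto simp: sets_restrict_space intro!: image_eqI[where x="{xh c}"])

lemma sY: "c < N \<Longrightarrow> {yh c} \<in> sets MY"
  using yh_in[of c] by (auto simp: sets_restrict_space intro!: image_eqI[where x="{yh c}"])

lemma sM: "c < N \<Longrightarrow> {gp c} \<in> sets MM"
proof -
  assume c: "c < N"
  have "{xh c} \<times> {yh c} \<in> sets MM" by (intro pair_measureI sX sY c)
  then show ?thesis by simp
qed

lemma ginj: "inj_on gp {..<N}"
  using xinj by (auto simp: inj_on_def)

lemma unif: "set_pmf (pmf_of_set {..<N}) \<subseteq> {..<N}" "\<And>c. c < N \<Longrightarrow> pmf (pmf_of_set {..<N}) c = 1 / real N"
proof -
  have "0 \<in> {..<N}" using N_pos by simp
  then have ne: "{..<N} \<noteq> {}" by blast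
  show "set_pmf (pmf_of_set {..<N}) \<subseteq> {..<N}" using ne by simp
  show "\<And>c. c < N \<Longrightarrow> pmf (pmf_of_set {..<N}) c = 1 / real N" using ne by simp
qed

lemma PX_prob: "prob_space PX" and PX_sets: "sets PX = sets MX"
  using pmf_distr_facts(1,2)[of "pmf_of_set {..<N}" N xh MX] unif xh_in N_pos spX by auto

lemma PX_pt: "c < N \<Longrightarrow> measure PX {xh c} = 1 / real N"
  using pmf_distr_point[of "pmf_of_set {..<N}" N xh MX c] unif xh_in N_pos spX xinj sX by auto

lemma PX_conc: "emeasure PX (space PX - xh ` {..<N}) = 0"
  using pmf_distr_conc[of "pmf_of_set {..<N}" N xh MX] unif xh_in N_pos spX sX by auto

lemma Pemp_prob: "prob_space Pemp" and Pemp_sets: "sets Pemp = sets MM"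
  using pmf_distr_facts(1,2)[of "pmf_of_set {..<N}" N gp MM] unif xh_in yh_in N_pos spM
  by auto

lemma Pemp_pt: "c < N \<Longrightarrow> measure Pemp {gp c} = 1 / real N"
  using pmf_distr_point[of "pmf_of_set {..<N}" N gp MM c] unif xh_in yh_in N_pos spM ginj sM
  by auto

lemma Pemp_conc: "emeasure Pemp (space Pemp - gp ` {..<N}) = 0"
  using pmf_distr_conc[of "pmf_of_set {..<N}" N gp MM] unif xh_in yh_in N_pos spM sM
  by auto

end

context drset
begin

lemma Pth_prob: "c < N \<Longrightarrow> prob_space (P (th c))"
  by (rule prob_P[OF thT])

lemma P_sets: "sets (P \<theta>) = sets MY"
  using nu_sets by simp

lemma int_ell:
  assumes c: "c < N"
  shows "integrable (P (th c)) (\<lambda>y. FF (xh c, y)) \<and> (\<integral>y. FF (xh c, y) \<partial>P (th c)) = ell c"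
proof -
  interpret Pt: prob_space "P (th c)" by (rule Pth_prob[OF c])
  define v where "v = lam w (xh c)"
  have sp1: "measure (P (th c)) (space nu) = 1" using Pt.prob_space by simp
  have mt: "integrable (P (th c)) (\<lambda>y. T y \<bullet> v) \<and> (\<integral>y. T y \<bullet> v \<partial>P (th c)) = T (yh c) \<bullet> v"
    by (rule mean_T[OF thT[OF c] thg[OF c]])
  have eq: "(\<lambda>y. FF (xh c, y)) = (\<lambda>y. Psi nu h T v - T y \<bullet> v)"
    by (simp add: ell_loss_def v_def)
  have i: "integrable (P (th c)) (\<lambda>y. Psi nu h T v - T y \<bullet> v)"
    using mt by (intro Bochner_Integration.integrable_diff) auto
  have "(\<integral>y. Psi nu h T v - T y \<bullet> v \<partial>P (th c)) = Psi nu h T v - T (yh c) \<bullet> v"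
    using mt by (subst Bochner_Integration.integral_diff) (auto simp: sp1)
  also have "\<dots> = ell c" by (simp add: ell_loss_def v_def)
  finally show ?thesis using i unfolding eq by simp
qed

lemma KLX:
  assumes QX: "prob_space QX" and QXs: "sets QX = sets MX"
  shows "emeasure QX (space QX - xh ` {..<N}) = 0 \<Longrightarrow>
           KL QX PX = ereal (\<Sum>c<N. measure QX {xh c} * ln (measure QX {xh c} / (1 / real N)))"
    and "emeasure QX (space QX - xh ` {..<N}) \<noteq> 0 \<Longrightarrow> KL QX PX = \<infinity>"
proof -
  have se: "sets QX = sets PX" using QXs PX_sets by simp
  have sing: "s \<in> xh ` {..<N} \<Longrightarrow> {s} \<in> sets PX" for s using sX PX_sets by auto
  have pos: "s \<in> xh ` {..<N} \<Longrightarrow> 0 < measure PX {s}" for s using PX_pt N_pos by auto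
  have fin: "finite (xh ` {..<N})" by simp
  note K = KL_discrete[OF QX PX_prob se fin sing PX_conc pos]
  show "emeasure QX (space QX - xh ` {..<N}) \<noteq> 0 \<Longrightarrow> KL QX PX = \<infinity>" using K(3) by simp
  assume z: "emeasure QX (space QX - xh ` {..<N}) = 0"
  have "KL QX PX = ereal (\<Sum>s\<in>xh ` {..<N}. measure QX {s} * ln (measure QX {s} / measure PX {s}))"
    by (rule K(2)) (simp_all add: z)
  also have "(\<Sum>s\<in>xh ` {..<N}. measure QX {s} * ln (measure QX {s} / measure PX {s}))
      = (\<Sum>c<N. measure QX {xh c} * ln (measure QX {xh c} / measure PX {xh c}))"
    by (subst sum.reindex[OF xinj]) simp
  also have "\<dots> = (\<Sum>c<N. measure QX {xh c} * ln (measure QX {xh c} / (1 / real N)))"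
    by (intro sum.cong refl) (simp add: PX_pt)
  finally show "KL QX PX = ereal (\<Sum>c<N. measure QX {xh c} * ln (measure QX {xh c} / (1 / real N)))" .
qed

lemma KLE:
  assumes Q: "prob_space Q" and Qs: "sets Q = sets MM"
  shows "emeasure Q (space Q - gp ` {..<N}) = 0 \<Longrightarrow>
           KL Q Pemp = ereal (\<Sum>c<N. measure Q {gp c} * ln (measure Q {gp c} / (1 / real N)))"
    and "emeasure Q (space Q - gp ` {..<N}) \<noteq> 0 \<Longrightarrow> KL Q Pemp = \<infinity>"
proof -
  have se: "sets Q = sets Pemp" using Qs Pemp_sets by simp
  have sing: "s \<in> gp ` {..<N} \<Longrightarrow> {s} \<in> sets Pemp" for s using sM Pemp_sets by auto
  have pos: "s \<in> gp ` {..<N} \<Longrightarrow> 0 < measure Pemp {s}" for s using Pemp_pt N_pos by auto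
  have fin: "finite (gp ` {..<N})" by simp
  note K = KL_discrete[OF Q Pemp_prob se fin sing Pemp_conc pos]
  show "emeasure Q (space Q - gp ` {..<N}) \<noteq> 0 \<Longrightarrow> KL Q Pemp = \<infinity>" using K(3) by simp
  assume z: "emeasure Q (space Q - gp ` {..<N}) = 0"
  have "KL Q Pemp = ereal (\<Sum>s\<in>gp ` {..<N}. measure Q {s} * ln (measure Q {s} / measure Pemp {s}))"
    by (rule K(2)) (simp_all add: z)
  also have "(\<Sum>s\<in>gp ` {..<N}. measure Q {s} * ln (measure Q {s} / measure Pemp {s}))
      = (\<Sum>c<N. measure Q {gp c} * ln (measure Q {gp c} / measure Pemp {gp c}))"
    by (subst sum.reindex[OF ginj]) simp
  also have "\<dots> = (\<Sum>c<N. measure Q {gp c} * ln (measure Q {gp c} / (1 / real N)))"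
    by (intro sum.cong refl) (simp add: Pemp_pt)
  finally show "KL Q Pemp = ereal (\<Sum>c<N. measure Q {gp c} * ln (measure Q {gp c} / (1 / real N)))" .
qed

end

context drset
begin

lemma int_sl:
  assumes Qp: "prob_space Q" and Qs: "sets Q = sets MM"
    and q: "\<And>c. c < N \<Longrightarrow> 0 \<le> q c" and qs: "(\<Sum>c<N. q c) = 1"
    and rect: "\<And>c A. c < N \<Longrightarrow> A \<in> sets MY \<Longrightarrow> emeasure Q ({xh c} \<times> A) = ennreal (q c) * emeasure (P (th c)) A"
    and Fm: "FF \<in> borel_measurable MM"
  shows "(\<integral>z. FF z \<partial>Q) = (\<Sum>c<N. q c * ell c)"
proof -
  have "(\<integral>z. FF z \<partial>Q) = (\<Sum>c<N. q c * (\<integral>y. FF (xh c, y) \<partial>P (th c)))"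
    by (rule integral_slices[where Pc="\<lambda>c. P (th c)" and q=q and F=FF and xh=xh and MX=MX and MY=MY and N=N,
          OF Qp Qs Pth_prob P_sets sX xinj q qs rect Fm]) (use int_ell in blast)+
  also have "\<dots> = (\<Sum>c<N. q c * ell c)" using int_ell by (intro sum.cong refl) auto
  finally show ?thesis .
qed

lemma int_pts:
  assumes Qp: "prob_space Q" and Qs: "sets Q = sets MM"
    and conc: "emeasure Q (space Q - gp ` {..<N}) = 0"
    and Fm: "FF \<in> borel_measurable MM"
  shows "(\<integral>z. FF z \<partial>Q) = (\<Sum>c<N. measure Q {gp c} * ell c)"
proof -
  interpret prob_space Q by fact
  have S: "gp ` {..<N} \<in> sets Q"
    by (rule finite_set_in_sets) (simp, erule imageE, simp add: sM Qs)
  have ae: "AE z in Q. z \<in> gp ` {..<N}"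
    by (rule AE_I'[where N="space Q - gp ` {..<N}"]) (use conc S in auto)
  have FQ: "FF \<in> borel_measurable Q" using Fm by (subst measurable_cong_sets[OF Qs refl])
  have sing: "s \<in> gp ` {..<N} \<Longrightarrow> {s} \<in> sets Q" for s using sM Qs by auto
  have "(\<integral>z. FF z \<partial>Q) = (\<Sum>s\<in>gp ` {..<N}. FF s * measure Q {s})"
    by (rule integral_finite_support) (use ae sing FQ in \<open>auto intro: finite_measure_axioms\<close>)
  also have "\<dots> = (\<Sum>c<N. FF (gp c) * measure Q {gp c})"
    by (subst sum.reindex[OF ginj]) simp
  also have "\<dots> = (\<Sum>c<N. measure Q {gp c} * ell c)"
    by (intro sum.cong refl) simp
  finally show ?thesis .
qed

lemma Lm:
  assumes Q: "Q \<in> amb_set MX MY nu h T N xh PX th (\<lambda>_. 0) eps"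
  shows "sets Q = sets MM \<and> (\<exists>q. Vq q \<and> (FF \<in> borel_measurable MM \<longrightarrow> (\<integral>z. FF z \<partial>Q) = (\<Sum>c<N. q c * ell c)))"
proof -
  note Qd = Q[unfolded amb_set_def mem_Collect_eq]
  have Qp: "prob_space Q" using Qd by (rule conjunct1)
  have Qs: "sets Q = sets MM" using conjunct1[OF conjunct2[OF Qd]] .
  note ex = conjunct2[OF conjunct2[OF Qd]]
  from ex obtain QX \<theta> where QX: "prob_space QX" and QXs: "sets QX = sets MX"
    and thT': "\<forall>c<N. \<theta> c \<in> Theta nu h T"
    and rect: "\<forall>c<N. \<forall>A\<in>sets MY. emeasure Q ({xh c} \<times> A) = emeasure QX {xh c} * emeasure (P (\<theta> c)) A"
    and kl: "\<forall>c<N. KL (P (\<theta> c)) (P (th c)) \<le> ereal 0"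
    and klx: "KL QX PX + ereal (\<Sum>c<N. 0 * measure QX {xh c}) \<le> ereal eps"
    by (elim exE conjE) (rule that; assumption)
  interpret QX: prob_space QX by fact
  have Peq: "P (\<theta> c) = P (th c)" if c: "c < N" for c
  proof (rule KL_le_0_imp_eq[OF prob_P Pth_prob[OF c]])
    show "\<theta> c \<in> Theta nu h T" using thT' c by blast
    show "sets (P (\<theta> c)) = sets (P (th c))" by simp
    have e0: "(0::ereal) = ereal 0" by (rule zero_ereal_def)
    show "KL (P (\<theta> c)) (P (th c)) \<le> 0" using kl c unfolding e0 by blast
  qed
  have klx': "KL QX PX \<le> ereal eps" using klx by simp
  have conc: "emeasure QX (space QX - xh ` {..<N}) = 0"
  proof (rule ccontr)
    assume "\<not> ?thesis" then have "KL QX PX = \<infinity>" by (rule KLX(2)[OF QX QXs])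
    then show False using klx' by simp
  qed
  define q where "q c = measure QX {xh c}" for c
  have kv: "(\<Sum>c<N. q c * ln (q c / (1 / real N))) \<le> eps"
    using KLX(1)[OF QX QXs conc] klx' unfolding q_def by simp
  have qs: "(\<Sum>c<N. q c) = 1" unfolding q_def
    by (rule sum_points_one[OF QX _ xinj conc]) (use sX QXs in auto)
  have qnn: "0 \<le> q c" for c by (simp add: q_def)
  have V: "Vq q" unfolding Vq_def using kv qs qnn by blast
  have rect': "emeasure Q ({xh c} \<times> A) = ennreal (q c) * emeasure (P (th c)) A"
    if "c < N" "A \<in> sets MY" for c A
    using rect Peq that by (simp add: q_def QX.emeasure_eq_measure)
  have "FF \<in> borel_measurable MM \<longrightarrow> (\<integral>z. FF z \<partial>Q) = (\<Sum>c<N. q c * ell c)"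
    using int_sl[OF Qp Qs qnn qs rect'] by blast
  then show ?thesis using Qs V by blast
qed

lemma Rm:
  assumes Qp: "prob_space Q" and Qs: "sets Q = sets MM" and kl: "KL Q Pemp \<le> ereal eps"
  shows "\<exists>q. Vq q \<and> (FF \<in> borel_measurable MM \<longrightarrow> (\<integral>z. FF z \<partial>Q) = (\<Sum>c<N. q c * ell c))"
proof -
  interpret prob_space Q by fact
  have conc: "emeasure Q (space Q - gp ` {..<N}) = 0"
  proof (rule ccontr)
    assume "\<not> ?thesis" then have "KL Q Pemp = \<infinity>" by (rule KLE(2)[OF Qp Qs])
    then show False using kl by simp
  qed
  define q where "q c = measure Q {gp c}" for c
  have kv: "(\<Sum>c<N. q c * ln (q c / (1 / real N))) \<le> eps"
    using KLE(1)[OF Qp Qs conc] kl unfolding q_def by simp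
  have qs: "(\<Sum>c<N. q c) = 1" unfolding q_def
    by (rule sum_points_one[OF Qp _ ginj conc]) (use sM Qs in auto)
  have qnn: "0 \<le> q c" for c by (simp add: q_def)
  have V: "Vq q" unfolding Vq_def using kv qs qnn by blast
  have "FF \<in> borel_measurable MM \<longrightarrow> (\<integral>z. FF z \<partial>Q) = (\<Sum>c<N. q c * ell c)"
    using int_pts[OF Qp Qs conc] unfolding q_def by blast
  then show ?thesis using V by blast
qed

end

context drset
begin

lemma Vq_D:
  assumes "Vq q"
  shows "\<And>c. c < N \<Longrightarrow> 0 \<le> q c" and "(\<Sum>c<N. q c) = 1" and "(\<Sum>c<N. q c * ln (q c / (1 / real N))) \<le> eps"
  using assms unfolding Vq_def by blast+

lemma Rc:
  assumes V: "Vq q"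
  shows "\<exists>Q. prob_space Q \<and> sets Q = sets MM \<and> KL Q Pemp \<le> ereal eps \<and>
     (FF \<in> borel_measurable MM \<longrightarrow> (\<integral>z. FF z \<partial>Q) = (\<Sum>c<N. q c * ell c))"
proof -
  note q = Vq_D(1)[OF V] and qs = Vq_D(2)[OF V] and kv = Vq_D(3)[OF V]
  obtain p where sp: "set_pmf p \<subseteq> {..<N}" and pp: "\<forall>c<N. pmf p c = q c" using mk_pmf[OF q qs] by blast
  define Q where "Q = distr (measure_pmf p) MM gp"
  have gK: "gp i \<in> space MM" if "i < N" for i using xh_in[OF that] yh_in[OF that] spM by simp
  have Qp: "prob_space Q" unfolding Q_def by (rule pmf_distr_facts(1)[of p N gp MM, OF sp gK N_pos])
  have Qs: "sets Q = sets MM" unfolding Q_def by simp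
  have Qpt: "measure Q {gp c} = q c" if c: "c < N" for c
    unfolding Q_def using pmf_distr_point[of p N gp MM c, OF sp gK N_pos ginj c sM[OF c]] pp c by simp
  have conc: "emeasure Q (space Q - gp ` {..<N}) = 0"
    unfolding Q_def using pmf_distr_conc[of p N gp MM, OF sp gK N_pos sM] by simp
  have "KL Q Pemp = ereal (\<Sum>c<N. measure Q {gp c} * ln (measure Q {gp c} / (1 / real N)))"
    by (rule KLE(1)[OF Qp Qs conc])
  also have "(\<Sum>c<N. measure Q {gp c} * ln (measure Q {gp c} / (1 / real N))) = (\<Sum>c<N. q c * ln (q c / (1 / real N)))"
    by (intro sum.cong refl) (simp add: Qpt)
  finally have kl: "KL Q Pemp \<le> ereal eps" using kv by simp
  have "FF \<in> borel_measurable MM \<longrightarrow> (\<integral>z. FF z \<partial>Q) = (\<Sum>c<N. q c * ell c)"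
  proof
    assume Fm: "FF \<in> borel_measurable MM"
    have "(\<integral>z. FF z \<partial>Q) = (\<Sum>c<N. measure Q {gp c} * ell c)" by (rule int_pts[OF Qp Qs conc Fm])
    also have "\<dots> = (\<Sum>c<N. q c * ell c)" by (intro sum.cong refl) (simp add: Qpt)
    finally show "(\<integral>z. FF z \<partial>Q) = (\<Sum>c<N. q c * ell c)" .
  qed
  then show ?thesis using Qp Qs kl by blast
qed

lemma Lc:
  assumes V: "Vq q"
  shows "\<exists>Q \<in> amb_set MX MY nu h T N xh PX th (\<lambda>_. 0) eps.
     (FF \<in> borel_measurable MM \<longrightarrow> (\<integral>z. FF z \<partial>Q) = (\<Sum>c<N. q c * ell c))"
proof -
  note q = Vq_D(1)[OF V] and qs = Vq_D(2)[OF V] and kv = Vq_D(3)[OF V]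
  obtain p where sp: "set_pmf p \<subseteq> {..<N}" and pp: "\<forall>c<N. pmf p c = q c" using mk_pmf[OF q qs] by blast
  define \<iota> where "\<iota> c = (if c < N then c else 0)" for c
  have \<iota>N: "\<iota> c < N" for c using N_pos by (simp add: \<iota>_def)
  have Pm: "(\<lambda>y. (xh c, y)) \<in> measurable (P \<theta>') MM" if c: "c < N" for c \<theta>'
  proof -
    have "(\<lambda>y. (xh c, y)) \<in> measurable MY MM"
      using xh_in[OF c] by (intro measurable_Pair measurable_const measurable_ident) (auto simp: spX)
    then show ?thesis by (subst measurable_cong_sets[OF P_sets refl])
  qed
  define K where "K c = distr (P (th (\<iota> c))) MM (\<lambda>y. (xh (\<iota> c), y))" for c
  have Kp: "prob_space (K c)" for c
    unfolding K_def by (rule prob_space.prob_space_distr[OF Pth_prob[OF \<iota>N] Pm[OF \<iota>N]])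
  have Ks: "sets (K c) = sets MM" for c unfolding K_def by simp
  have Kmeas: "K \<in> measurable (measure_pmf p) (subprob_algebra MM)"
    using Kp Ks by (simp add: space_subprob_algebra prob_space_imp_subprob_space)
  define Q where "Q = measure_pmf p \<bind> K"
  have Qp: "prob_space Q" unfolding Q_def by (rule measure_pmf.prob_space_bind[OF _ Kmeas]) (simp add: Kp)
  have Qs: "sets Q = sets MM" unfolding Q_def by (rule sets_bind_measurable[OF Kmeas]) simp
  have Qe: "emeasure Q X = (\<Sum>c<N. emeasure (K c) X * ennreal (q c))" if X: "X \<in> sets MM" for X
  proof -
    have "emeasure Q X = (\<integral>\<^sup>+c. emeasure (K c) X \<partial>measure_pmf p)"
      unfolding Q_def by (rule emeasure_bind[OF _ Kmeas X]) simp
    also have "\<dots> = (\<Sum>c<N. emeasure (K c) X * emeasure (measure_pmf p) {c})"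
      by (rule nn_integral_finite_support) (use sp in \<open>auto simp: AE_measure_pmf_iff\<close>)
    also have "\<dots> = (\<Sum>c<N. emeasure (K c) X * ennreal (q c))"
      by (intro sum.cong refl) (simp add: emeasure_pmf_single pp)
    finally show ?thesis .
  qed
  have Kr: "emeasure (K c') ({xh c} \<times> A) = (if c' = c then emeasure (P (th c)) A else 0)"
    if c: "c < N" and c': "c' < N" and A: "A \<in> sets MY" for c c' A
  proof -
    have \<iota>: "\<iota> c' = c'" using c' by (simp add: \<iota>_def)
    have R: "{xh c} \<times> A \<in> sets MM" by (intro pair_measureI sX c A)
    have "emeasure (K c') ({xh c} \<times> A) = emeasure (P (th c')) ((\<lambda>y. (xh c', y)) -` ({xh c} \<times> A) \<inter> space (P (th c')))"
      unfolding K_def \<iota> by (rule emeasure_distr[OF Pm[OF c'] R])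
    also have "(\<lambda>y. (xh c', y)) -` ({xh c} \<times> A) \<inter> space (P (th c')) = (if c' = c then A else {})"
    proof -
      have sp1: "space (P (th c')) = Ycal" by (simp add: spnu)
      have Asp: "A \<subseteq> Ycal" using sets.sets_into_space[OF A] spY by simp
      have "xh c' = xh c \<longleftrightarrow> c' = c" using xinj c c' by (auto simp: inj_on_def)
      then show ?thesis using Asp sp1 by auto
    qed
    also have "emeasure (P (th c')) (if c' = c then A else {}) = (if c' = c then emeasure (P (th c)) A else 0)"
      by simp
    finally show ?thesis .
  qed
  have rectQ: "emeasure Q ({xh c} \<times> A) = ennreal (q c) * emeasure (P (th c)) A"
    if c: "c < N" and A: "A \<in> sets MY" for c A
  proof -
    have "emeasure Q ({xh c} \<times> A) = (\<Sum>c'<N. emeasure (K c') ({xh c} \<times> A) * ennreal (q c'))"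
      by (rule Qe) (intro pair_measureI sX c A)
    also have "\<dots> = (\<Sum>c'<N. if c' = c then emeasure (P (th c)) A * ennreal (q c) else 0)"
      by (intro sum.cong refl) (simp add: Kr[OF c _ A])
    also have "\<dots> = emeasure (P (th c)) A * ennreal (q c)" using c by simp
    finally show ?thesis by (simp add: mult.commute)
  qed
  define QX where "QX = distr (measure_pmf p) MX xh"
  have xK: "xh i \<in> space MX" if "i < N" for i using xh_in[OF that] spX by simp
  have QXp: "prob_space QX" unfolding QX_def by (rule pmf_distr_facts(1)[of p N xh MX, OF sp xK N_pos])
  have QXs: "sets QX = sets MX" unfolding QX_def by simp
  have QXpt: "measure QX {xh c} = q c" if c: "c < N" for c
    unfolding QX_def using pmf_distr_point[of p N xh MX c, OF sp xK N_pos xinj c sX[OF c]] pp c by simp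
  have QXconc: "emeasure QX (space QX - xh ` {..<N}) = 0"
    unfolding QX_def using pmf_distr_conc[of p N xh MX, OF sp xK N_pos sX] by simp
  interpret QX: prob_space QX by (rule QXp)
  have "KL QX PX = ereal (\<Sum>c<N. measure QX {xh c} * ln (measure QX {xh c} / (1 / real N)))"
    by (rule KLX(1)[OF QXp QXs QXconc])
  also have "(\<Sum>c<N. measure QX {xh c} * ln (measure QX {xh c} / (1 / real N))) = (\<Sum>c<N. q c * ln (q c / (1 / real N)))"
    by (intro sum.cong refl) (simp add: QXpt)
  finally have klx: "KL QX PX + ereal (\<Sum>c<N. 0 * measure QX {xh c}) \<le> ereal eps" using kv by simp
  have thT': "\<forall>c<N. th c \<in> Theta nu h T" using thT by blast
  have rect: "\<forall>c<N. \<forall>A\<in>sets MY. emeasure Q ({xh c} \<times> A) = emeasure QX {xh c} * emeasure (P (th c)) A"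
    using rectQ QXpt by (simp add: QX.emeasure_eq_measure)
  have kl: "\<forall>c<N. KL (P (th c)) (P (th c)) \<le> ereal 0"
    using KL_self[OF Pth_prob] by simp
  have mem: "Q \<in> amb_set MX MY nu h T N xh PX th (\<lambda>_. 0) eps"
    unfolding amb_set_def mem_Collect_eq
    by (intro conjI exI[of _ QX] exI[of _ th] Qp Qs QXp QXs thT' rect kl klx)
  have "FF \<in> borel_measurable MM \<longrightarrow> (\<integral>z. FF z \<partial>Q) = (\<Sum>c<N. q c * ell c)"
    using int_sl[OF Qp Qs q qs rectQ] by blast
  then show ?thesis using mem by blast
qed

end

context drset
begin

lemma int_nonmeas:
  assumes Qs: "sets Q = sets MM" and nm: "FF \<notin> borel_measurable MM"
  shows "(\<integral>z. FF z \<partial>Q) = 0"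
proof (rule not_integrable_integral_eq)
  show "\<not> integrable Q FF"
  proof
    assume "integrable Q FF"
    then have "FF \<in> borel_measurable Q" by (rule borel_measurable_integrable)
    then have "FF \<in> borel_measurable MM" by (subst (asm) measurable_cong_sets[OF Qs refl])
    then show False using nm by simp
  qed
qed

lemma main_eq:
  "(SUP Q \<in> amb_set MX MY nu h T N xh PX th (\<lambda>_. 0) eps. ereal (\<integral>z. ell_loss nu h T lam (fst z) (snd z) w \<partial>Q))
   = (SUP Q \<in> {Q. prob_space Q \<and> sets Q = sets (MX \<Otimes>\<^sub>M MY) \<and> KL Q Pemp \<le> ereal eps}.
        ereal (\<integral>z. ell_loss nu h T lam (fst z) (snd z) w \<partial>Q))"
proof -
  define val where "val q = (if FF \<in> borel_measurable MM then ereal (\<Sum>c<N. q c * ell c) else 0)" for q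
  have key: "ereal (\<integral>z. FF z \<partial>Q) = val q"
    if Qs: "sets Q = sets MM" and H: "FF \<in> borel_measurable MM \<longrightarrow> (\<integral>z. FF z \<partial>Q) = (\<Sum>c<N. q c * ell c)" for Q q
  proof (cases "FF \<in> borel_measurable MM")
    case True then show ?thesis using H by (simp add: val_def)
  next
    case False then show ?thesis using int_nonmeas[OF Qs False] by (simp add: val_def)
  qed
  have L: "(\<lambda>Q. ereal (\<integral>z. FF z \<partial>Q)) ` amb_set MX MY nu h T N xh PX th (\<lambda>_. 0) eps = val ` {q. Vq q}"
  proof (intro set_eqI iffI)
    fix r assume "r \<in> (\<lambda>Q. ereal (\<integral>z. FF z \<partial>Q)) ` amb_set MX MY nu h T N xh PX th (\<lambda>_. 0) eps"
    then obtain Q where Q: "Q \<in> amb_set MX MY nu h T N xh PX th (\<lambda>_. 0) eps" and r: "r = ereal (\<integral>z. FF z \<partial>Q)" by blast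
    from Lm[OF Q] obtain q where Qs: "sets Q = sets MM" and V: "Vq q"
      and H: "FF \<in> borel_measurable MM \<longrightarrow> (\<integral>z. FF z \<partial>Q) = (\<Sum>c<N. q c * ell c)" by blast
    show "r \<in> val ` {q. Vq q}" using key[OF Qs H] V r by blast
  next
    fix r assume "r \<in> val ` {q. Vq q}"
    then obtain q where V: "Vq q" and r: "r = val q" by blast
    from Lc[OF V] obtain Q where Q: "Q \<in> amb_set MX MY nu h T N xh PX th (\<lambda>_. 0) eps"
      and H: "FF \<in> borel_measurable MM \<longrightarrow> (\<integral>z. FF z \<partial>Q) = (\<Sum>c<N. q c * ell c)" by blast
    have Qs: "sets Q = sets MM" using Lm[OF Q] by blast
    show "r \<in> (\<lambda>Q. ereal (\<integral>z. FF z \<partial>Q)) ` amb_set MX MY nu h T N xh PX th (\<lambda>_. 0) eps"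
    proof (rule image_eqI[where x=Q])
      show "r = ereal (\<integral>z. FF z \<partial>Q)" using key[OF Qs H] r by simp
    qed (rule Q)
  qed
  have R: "(\<lambda>Q. ereal (\<integral>z. FF z \<partial>Q)) ` {Q. prob_space Q \<and> sets Q = sets (MX \<Otimes>\<^sub>M MY) \<and> KL Q Pemp \<le> ereal eps} = val ` {q. Vq q}"
  proof (intro set_eqI iffI)
    fix r assume "r \<in> (\<lambda>Q. ereal (\<integral>z. FF z \<partial>Q)) ` {Q. prob_space Q \<and> sets Q = sets (MX \<Otimes>\<^sub>M MY) \<and> KL Q Pemp \<le> ereal eps}"
    then obtain Q where Qp: "prob_space Q" and Qs: "sets Q = sets MM" and kl: "KL Q Pemp \<le> ereal eps"
      and r: "r = ereal (\<integral>z. FF z \<partial>Q)" by blast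
    from Rm[OF Qp Qs kl] obtain q where V: "Vq q"
      and H: "FF \<in> borel_measurable MM \<longrightarrow> (\<integral>z. FF z \<partial>Q) = (\<Sum>c<N. q c * ell c)" by blast
    show "r \<in> val ` {q. Vq q}" using key[OF Qs H] V r by blast
  next
    fix r assume "r \<in> val ` {q. Vq q}"
    then obtain q where V: "Vq q" and r: "r = val q" by blast
    from Rc[OF V] obtain Q where Qp: "prob_space Q" and Qs: "sets Q = sets MM" and kl: "KL Q Pemp \<le> ereal eps"
      and H: "FF \<in> borel_measurable MM \<longrightarrow> (\<integral>z. FF z \<partial>Q) = (\<Sum>c<N. q c * ell c)" by blast
    show "r \<in> (\<lambda>Q. ereal (\<integral>z. FF z \<partial>Q)) ` {Q. prob_space Q \<and> sets Q = sets (MX \<Otimes>\<^sub>M MY) \<and> KL Q Pemp \<le> ereal eps}"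
    proof (rule image_eqI[where x=Q])
      show "r = ereal (\<integral>z. FF z \<partial>Q)" using key[OF Qs H] r by simp
    qed (use Qp Qs kl in simp)
  qed
  show ?thesis using L R by simp
qed

end

theorem proposition4p1:
  fixes nu :: "(real^'m) measure" and h :: "real^'m \<Rightarrow> real" and T :: "real^'m \<Rightarrow> real^'p"
    and Xcal :: "(real^'n) set" and Ycal :: "(real^'m) set" and Wcal :: "(real^'k) set"
    and lam :: "real^'k \<Rightarrow> real^'n \<Rightarrow> real^'p"
    and N :: nat and xh :: "nat \<Rightarrow> real^'n" and yh :: "nat \<Rightarrow> real^'m"
    and th :: "nat \<Rightarrow> real^'p" and eps :: real
  assumes nu_sets: "sets nu = sets (restrict_space borel Ycal)"
    and h_meas: "h \<in> borel_measurable nu" and h_nonneg: "\<forall>y\<in>Ycal. 0 \<le> h y"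
    and T_meas: "T \<in> borel_measurable nu"
    and regular: "regular_expfam nu h T"
    and lam_cont: "continuous_on (Wcal \<times> Xcal) (\<lambda>(w, x). lam w x)"
    and lam_Theta: "\<forall>w\<in>Wcal. \<forall>x\<in>Xcal. lam w x \<in> Theta nu h T"
    and N_pos: "N \<ge> 1"
    and xh_in: "\<forall>i<N. xh i \<in> Xcal" and yh_in: "\<forall>i<N. yh i \<in> Ycal"
    and xh_distinct: "inj_on xh {..<N}"
    and eps_nonneg: "0 \<le> eps"
    and th_Theta: "\<forall>c<N. th c \<in> Theta nu h T"
    and th_grad: "\<forall>c<N. (Psi nu h T has_derivative (\<lambda>v. T (yh c) \<bullet> v)) (at (th c))"
  shows "\<forall>w\<in>Wcal.
     (SUP Q \<in> amb_set (restrict_space borel Xcal) (restrict_space borel Ycal) nu h T N xh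
                 (distr (measure_pmf (pmf_of_set {..<N})) (restrict_space borel Xcal) xh)
                 th (\<lambda>_. 0) eps.
        ereal (\<integral>z. ell_loss nu h T lam (fst z) (snd z) w \<partial>Q))
   = (SUP Q \<in> {Q. prob_space Q
                   \<and> sets Q = sets (restrict_space borel Xcal \<Otimes>\<^sub>M restrict_space borel Ycal)
                   \<and> KL Q (distr (measure_pmf (pmf_of_set {..<N}))
                              (restrict_space borel Xcal \<Otimes>\<^sub>M restrict_space borel Ycal)
                              (\<lambda>i. (xh i, yh i))) \<le> ereal eps}.
        ereal (\<integral>z. ell_loss nu h T lam (fst z) (snd z) w \<partial>Q))"
proof (intro ballI)
  fix w assume w: "w \<in> Wcal"
  have spnu: "space nu = Ycal"
    using sets_eq_imp_space_eq[OF nu_sets] by (simp add: space_restrict_space)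
  have hnn: "\<And>y. y \<in> space nu \<Longrightarrow> 0 \<le> h y" using h_nonneg spnu by simp
  have lamT: "\<And>x. x \<in> Xcal \<Longrightarrow> lam w x \<in> Theta nu h T" using lam_Theta w by blast
  have xi: "\<And>i. i < N \<Longrightarrow> xh i \<in> Xcal" using xh_in by blast
  have yi: "\<And>i. i < N \<Longrightarrow> yh i \<in> Ycal" using yh_in by blast
  have thT: "\<And>c. c < N \<Longrightarrow> th c \<in> Theta nu h T" using th_Theta by blast
  have thg: "\<And>c. c < N \<Longrightarrow> (Psi nu h T has_derivative (\<lambda>v. T (yh c) \<bullet> v)) (at (th c))"
    using th_grad by blast
  interpret drset nu h T Xcal Ycal lam N xh yh th eps w
    by unfold_locales (rule hnn h_meas T_meas regular nu_sets lamT N_pos xi yi xh_distinct eps_nonneg thT thg; assumption?)+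
  show "(SUP Q \<in> amb_set (restrict_space borel Xcal) (restrict_space borel Ycal) nu h T N xh
                 (distr (measure_pmf (pmf_of_set {..<N})) (restrict_space borel Xcal) xh)
                 th (\<lambda>_. 0) eps.
        ereal (\<integral>z. ell_loss nu h T lam (fst z) (snd z) w \<partial>Q))
   = (SUP Q \<in> {Q. prob_space Q
                   \<and> sets Q = sets (restrict_space borel Xcal \<Otimes>\<^sub>M restrict_space borel Ycal)
                   \<and> KL Q (distr (measure_pmf (pmf_of_set {..<N}))
                              (restrict_space borel Xcal \<Otimes>\<^sub>M restrict_space borel Ycal)
                              (\<lambda>i. (xh i, yh i))) \<le> ereal eps}.
        ereal (\<integral>z. ell_loss nu h T lam (fst z) (snd z) w \<partial>Q))"
    by (rule main_eq)
qed

end
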